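(* Let $S$ be a semibounded relation in $\mathfrak H$ with lower bound $\gamma\in\mathbb R$ and let $c\le\gamma$. Then: (a) $S_{{\rm K},c}=\{\{\varphi,\varphi'\}\in S^*:\varphi'-c\varphi\in\mathrm{dom}\,\bar{\mathfrak t}((S-c)^{-1})\}$; and if $H$ is a selfadjoint extension of $S$ with $\mathrm{ran}\,(H-c)\subset\mathrm{dom}\,\bar{\mathfrak t}((S-c)^{-1})$, then $H=S_{{\rm K},c}$. (b) $S_{{\rm k},c}=S\,\widehat+\,\widehat{\mathfrak N}_c(S^* )$; and if $H$ is a symmetric extension of $S$ with $\mathrm{ran}\,(H-c)\subset\mathrm{ran}\,(S-c)$, then $H\subset S_{{\rm k},c}$. (c) For every $c<\gamma$, $S_{{\rm K},c}=\overline S\,\widehat+\,\widehat{\mathfrak N}_c(S^* )$; and $S_{{\rm k},\gamma}=S_{{\rm K},\gamma}$ holds if and only if $\mathrm{ran}\,(S-\gamma)=\overline{\mathrm{ran}}\,(S-\gamma)\cap\mathrm{ran}\,(S^*-\gamma)$; in particular it holds if $\mathrm{ran}\,(S-\gamma)$ is closed.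
   Context: Linear relations in $\mathfrak H$ are linear subspaces of $\mathfrak H\times\mathfrak H$; $T^*$ adjoint relation, $T^{**}=\overline T$ the closure, $T^{-1}=\{\{g,f\}:\{f,g\}\in T\}$, $RT=\{\{f,h\}:\exists g,\{f,g\}\in T,\{g,h\}\in R\}$, $T-c=\{\{f,g-cf\}:\{f,g\}\in T\}$, $c+T=\{\{f,g+cf\}\}$, $A\,\widehat+\,B=\{\{f+h,g+k\}:\{f,g\}\in A,\{h,k\}\in B\}$, $\widehat{\mathfrak N}_c(S^* )=\{\{f,cf\}:f\in\ker(S^*-c)\}$. Symmetric: $T\subset T^*$; selfadjoint: $T=T^*$. $S$ is semibounded with lower bound $\gamma$ if $\gamma$ is the supremum of all $c$ with $(\varphi',\varphi)\ge c\|\varphi\|^2$ on $S$. For a semibounded relation $T$, $\mathfrak t(T)[\varphi,\psi]=(\varphi',\psi)$ on $\mathrm{dom}\,T$; it is closable with closure $\bar{\mathfrak t}(T)$; here $\mathrm{dom}\,\mathfrak t((S-c)^{-1})=\mathrm{ran}\,(S-c)$. A representing map for $\mathfrak t(S)-c$ is a linear operator $Q_c$ into a Hilbert space with $\mathrm{dom}\,Q_c=\mathrm{dom}\,S$ and $\mathfrak t(S)[\varphi,\psi]=c(\varphi,\psi)+(Q_c\varphi,Q_c\psi)$; its companion relation is $J_c=\{\{Q_c\varphi,\varphi'-c\varphi\}:\{\varphi,\varphi'\}\in S\}$. The Kreĭn type extension is $S_{{\rm K},c}=c+J_c^{**}J_c^*$ and the weak Kreĭn type extension is $S_{{\rm k},c}=c+J_cJ_c^*$;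 both are independent of the choice of $Q_c$ and $S\subset S_{{\rm k},c}\subset S_{{\rm K},c}$. *)

theory Defs
  imports "HOL-Analysis.Analysis"
begin

text \<open>The library has no complex inner product spaces, so we introduce the standard
class (inner product antilinear in the first argument, linear in the second).\<close>

class complex_inner = real_normed_vector +
  fixes scaleC :: "complex \<Rightarrow> 'a \<Rightarrow> 'a"
    and cinner :: "'a \<Rightarrow> 'a \<Rightarrow> complex"
  assumes scaleC_add_right: "scaleC a (x + y) = scaleC a x + scaleC a y"
    and scaleC_add_left: "scaleC (a + b) x = scaleC a x + scaleC b x"
    and scaleC_scaleC: "scaleC a (scaleC b x) = scaleC (a * b) x"
    and scaleC_one: "scaleC 1 x = x"
    and scaleR_scaleC: "scaleR r x = scaleC (complex_of_real r) x"
    and cinner_commute: "cinner x y = cnj (cinner y x)"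
    and cinner_add_left: "cinner (x + y) z = cinner x z + cinner y z"
    and cinner_scaleC_left: "cinner (scaleC a x) y = cnj a * cinner x y"
    and cinner_self_real: "Im (cinner x x) = 0"
    and cinner_self_nonneg: "0 \<le> Re (cinner x x)"
    and cinner_self_eq_zero: "cinner x x = 0 \<longleftrightarrow> x = 0"
    and norm_eq_sqrt_cinner: "norm x = sqrt (Re (cinner x x))"

class chilbert = complex_inner + complete_space

definition lin_rel :: "('a::complex_inner \<times> 'b::complex_inner) set \<Rightarrow> bool" where
  "lin_rel T \<longleftrightarrow> (0, 0) \<in> T
     \<and> (\<forall>f g h k. (f, g) \<in> T \<longrightarrow> (h, k) \<in> T \<longrightarrow> (f + h, g + k) \<in> T)
     \<and> (\<forall>a f g. (f, g) \<in> T \<longrightarrow> (scaleC a f, scaleC a g) \<in> T)"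

definition adj :: "('a::complex_inner \<times> 'b::complex_inner) set \<Rightarrow> ('b \<times> 'a) set" where
  "adj T = {(h, k). \<forall>f g. (f, g) \<in> T \<longrightarrow> cinner g h = cinner f k}"

text \<open>Inverse relation is the library's converse; the product RT is T O R.\<close>

definition rshift :: "real \<Rightarrow> ('a::complex_inner \<times> 'a) set \<Rightarrow> ('a \<times> 'a) set" where
  "rshift c T = {(f, g - scaleR c f) | f g. (f, g) \<in> T}"

definition rplus :: "real \<Rightarrow> ('a::complex_inner \<times> 'a) set \<Rightarrow> ('a \<times> 'a) set" where
  "rplus c T = {(f, g + scaleR c f) | f g. (f, g) \<in> T}"

definition rsum :: "('a::complex_inner \<times> 'b::complex_inner) set \<Rightarrow> ('a \<times> 'b) set \<Rightarrow> ('a \<times> 'b) set" where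
  "rsum A B = {(f + h, g + k) | f g h k. (f, g) \<in> A \<and> (h, k) \<in> B}"

definition eig_rel :: "real \<Rightarrow> ('a::complex_inner \<times> 'a) set \<Rightarrow> ('a \<times> 'a) set" where
  "eig_rel c T = {(f, scaleR c f) | f. (f, scaleR c f) \<in> T}"

definition lb_set :: "('a::complex_inner \<times> 'a) set \<Rightarrow> real set" where
  "lb_set T = {c. \<forall>\<phi> \<phi>'. (\<phi>, \<phi>') \<in> T \<longrightarrow>
                  Im (cinner \<phi>' \<phi>) = 0 \<and> c * (norm \<phi>)\<^sup>2 \<le> Re (cinner \<phi>' \<phi>)}"

definition semibounded_lb :: "('a::complex_inner \<times> 'a) set \<Rightarrow> real \<Rightarrow> bool" where
  "semibounded_lb T \<gamma> \<longleftrightarrow> lb_set T \<noteq> {} \<and> bdd_above (lb_set T) \<and> \<gamma> = Sup (lb_set T)"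

text \<open>Domain of the closure of the form t(T)[phi,psi] = (phi',psi) on dom T:
  limits of sequences in dom T that are Cauchy with respect to the form, i.e.
  t(T)[u n - u m] \<rightarrow> 0.\<close>
definition form_closure_dom :: "('a::complex_inner \<times> 'a) set \<Rightarrow> 'a set" where
  "form_closure_dom T = {h. \<exists>u. (\<forall>n. u n \<in> Domain T) \<and> u \<longlonglongrightarrow> h \<and>
      (\<forall>e>0. \<exists>N. \<forall>n\<ge>N. \<forall>m\<ge>N. \<forall>g. (u n - u m, g) \<in> T \<longrightarrow>
           cmod (cinner g (u n - u m)) < e)}"

text \<open>Q is a representing map for t(S) - c: linear on dom S (its values outside dom S
  are irrelevant) and t(S)[phi,psi] = c (phi,psi) + (Q phi, Q psi).\<close>
definition rep_map :: "('a::complex_inner \<times> 'a) set \<Rightarrow> real \<Rightarrow> ('a \<Rightarrow> 'b::complex_inner) \<Rightarrow> bool" where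
  "rep_map S c Q \<longleftrightarrow>
     (\<forall>\<phi>\<in>Domain S. \<forall>\<psi>\<in>Domain S. Q (\<phi> + \<psi>) = Q \<phi> + Q \<psi>)
   \<and> (\<forall>a. \<forall>\<phi>\<in>Domain S. Q (scaleC a \<phi>) = scaleC a (Q \<phi>))
   \<and> (\<forall>\<phi> \<phi>' \<psi>. (\<phi>, \<phi>') \<in> S \<longrightarrow> \<psi> \<in> Domain S \<longrightarrow>
        cinner \<phi>' \<psi> = complex_of_real c * cinner \<phi> \<psi> + cinner (Q \<phi>) (Q \<psi>))"

definition companion :: "('a::complex_inner \<times> 'a) set \<Rightarrow> real \<Rightarrow> ('a \<Rightarrow> 'b::complex_inner) \<Rightarrow> ('b \<times> 'a) set" where
  "companion S c Q = {(Q \<phi>, \<phi>' - scaleR c \<phi>) | \<phi> \<phi>'. (\<phi>, \<phi>') \<in> S}"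

text \<open>Krein type extension S_K,c = c + J_c** J_c*.\<close>
definition krein_K :: "('a::complex_inner \<times> 'a) set \<Rightarrow> real \<Rightarrow> ('a \<Rightarrow> 'b::complex_inner) \<Rightarrow> ('a \<times> 'a) set" where
  "krein_K S c Q = rplus c (adj (companion S c Q) O adj (adj (companion S c Q)))"

text \<open>Weak Krein type extension S_k,c = c + J_c J_c*.\<close>
definition krein_k :: "('a::complex_inner \<times> 'a) set \<Rightarrow> real \<Rightarrow> ('a \<Rightarrow> 'b::complex_inner) \<Rightarrow> ('a \<times> 'a) set" where
  "krein_k S c Q = rplus c (adj (companion S c Q) O companion S c Q)"

end

theory Submission
  imports Defs
begin


lemma cinner_add_right: "cinner (x::'a::complex_inner) (y + z) = cinner x y + cinner x z"
  by (metis cinner_commute cinner_add_left complex_cnj_add)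

lemma cinner_scaleC_right: "cinner (x::'a::complex_inner) (scaleC a y) = a * cinner x y"
  by (metis cinner_commute cinner_scaleC_left complex_cnj_cnj complex_cnj_mult)

lemma cinner_zero_left[simp]: "cinner (0::'a::complex_inner) x = 0"
  using cinner_add_left[of "0::'a" 0 x] by simp

lemma cinner_zero_right[simp]: "cinner (x::'a::complex_inner) 0 = 0"
  using cinner_add_right[of x 0 0] by simp

lemma scaleC_real: "scaleC (complex_of_real r) (x::'a::complex_inner) = scaleR r x"
  by (simp add: scaleR_scaleC)

lemma scaleC_minus1: "scaleC (-1) (x::'a::complex_inner) = - x"
  using scaleR_scaleC[of "-1" x] by simp

lemma cinner_minus_left[simp]: "cinner (- x) (y::'a::complex_inner) = - cinner x y"
  by (metis cinner_scaleC_left scaleC_minus1 complex_cnj_minus complex_cnj_one mult_minus1)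

lemma cinner_minus_right[simp]: "cinner (x::'a::complex_inner) (- y) = - cinner x y"
  by (metis cinner_scaleC_right scaleC_minus1 mult_minus1)

lemma cinner_diff_left: "cinner (x - y) (z::'a::complex_inner) = cinner x z - cinner y z"
  by (metis cinner_add_left cinner_minus_left diff_conv_add_uminus)

lemma cinner_diff_right: "cinner (x::'a::complex_inner) (y - z) = cinner x y - cinner x z"
  by (metis cinner_add_right cinner_minus_right diff_conv_add_uminus)

lemma cinner_scaleR_left: "cinner (scaleR r x) (y::'a::complex_inner) = complex_of_real r * cinner x y"
  by (simp add: scaleR_scaleC cinner_scaleC_left)

lemma cinner_scaleR_right: "cinner (x::'a::complex_inner) (scaleR r y) = complex_of_real r * cinner x y"
  by (simp add: scaleR_scaleC cinner_scaleC_right)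

lemma cinner_self_norm: "cinner (x::'a::complex_inner) x = complex_of_real ((norm x)\<^sup>2)"
proof -
  have "(norm x)\<^sup>2 = Re (cinner x x)" using norm_eq_sqrt_cinner[of x] cinner_self_nonneg[of x] by simp
  then show ?thesis using cinner_self_real[of x] by (simp add: complex_eq_iff)
qed

lemma norm_sq_Re: "(norm (x::'a::complex_inner))\<^sup>2 = Re (cinner x x)"
  using cinner_self_norm[of x] by simp

lemma scaleC_zero_left[simp]: "scaleC 0 (x::'a::complex_inner) = 0"
  using scaleR_scaleC[of 0 x] by simp

lemma scaleC_zero_right[simp]: "scaleC a (0::'a::complex_inner) = 0"
  using scaleC_add_right[of a "0::'a" 0] by simp

lemma scaleC_minus_right: "scaleC a (- x) = - scaleC a (x::'a::complex_inner)"
  by (metis scaleC_minus1 scaleC_scaleC mult.commute)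

lemma scaleC_diff_right: "scaleC a (x - y) = scaleC a x - scaleC a (y::'a::complex_inner)"
  by (metis scaleC_add_right scaleC_minus_right diff_conv_add_uminus)

lemma norm_scaleC: "norm (scaleC a (x::'a::complex_inner)) = cmod a * norm x"
proof -
  have "(norm (scaleC a x))\<^sup>2 = Re (cnj a * (a * cinner x x))"
    unfolding norm_sq_Re cinner_scaleC_left cinner_scaleC_right by (simp only: mult.left_commute)
  also have "\<dots> = (cmod a)\<^sup>2 * (norm x)\<^sup>2"
  proof -
    have "cnj a * (a * cinner x x) = (a * cnj a) * complex_of_real ((norm x)\<^sup>2)"
      by (simp add: cinner_self_norm)
    also have "\<dots> = complex_of_real ((cmod a)\<^sup>2 * (norm x)\<^sup>2)"
      by (simp add: complex_norm_square[symmetric])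
    finally show ?thesis by simp
  qed
  finally have "(norm (scaleC a x))\<^sup>2 = (cmod a * norm x)\<^sup>2" by (simp add: power_mult_distrib)
  then show ?thesis by (simp add: power2_eq_iff_nonneg)
qed

lemma cauchy_schwarz: "cmod (cinner (x::'a::complex_inner) y) \<le> norm x * norm y"
proof (cases "y = 0")
  case True then show ?thesis by simp
next
  case False
  define N where "N = (norm y)\<^sup>2"
  have N: "N > 0" using False by (simp add: N_def)
  define a where "a = cinner y x"
  define s where "s = a / complex_of_real N"
  have yy: "cinner y y = complex_of_real N" by (simp add: N_def cinner_self_norm)
  have xy: "cinner x y = cnj a" by (simp add: a_def cinner_commute[of x y])
  have "cinner (x - scaleC s y) (x - scaleC s y)
      = cinner x x - s * cinner x y - cnj s * cinner y x + cnj s * s * cinner y y"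
    by (simp add: cinner_diff_left cinner_diff_right cinner_scaleC_left cinner_scaleC_right algebra_simps)
  also have "\<dots> = cinner x x - complex_of_real ((cmod a)\<^sup>2 / N)"
  proof -
    have aa: "a * cnj a = complex_of_real ((cmod a)\<^sup>2)" by (metis complex_norm_square of_real_power)
    have aa2: "cnj a * a = complex_of_real ((cmod a)\<^sup>2)" using aa by (simp add: mult.commute)
    show ?thesis using N
      by (simp add: s_def xy yy flip: a_def) (simp add: field_simps aa aa2)
  qed
  finally have "0 \<le> Re (cinner x x) - (cmod a)\<^sup>2 / N"
    using cinner_self_nonneg[of "x - scaleC s y"] by simp
  then have "(cmod a)\<^sup>2 \<le> (norm x)\<^sup>2 * (norm y)\<^sup>2" using N by (simp add: norm_sq_Re N_def field_simps)
  then have "(cmod a)\<^sup>2 \<le> (norm x * norm y)\<^sup>2" by (simp add: power_mult_distrib)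
  then have "cmod a \<le> norm x * norm y" by (rule power2_le_imp_le) simp
  then show ?thesis by (simp add: a_def cinner_commute[of x y])
qed

lemma bounded_bilinear_cinner: "bounded_bilinear (cinner :: 'a::complex_inner \<Rightarrow> 'a \<Rightarrow> complex)"
  apply (rule bounded_bilinear.intro)
  apply (simp_all add: cinner_add_left cinner_add_right cinner_scaleR_left cinner_scaleR_right scaleR_conv_of_real)
  by (rule exI[of _ 1]) (simp add: cauchy_schwarz)

lemmas tendsto_cinner = bounded_bilinear.tendsto[OF bounded_bilinear_cinner]
lemmas continuous_on_cinner = bounded_bilinear.continuous_on[OF bounded_bilinear_cinner]


instantiation prod :: (complex_inner, complex_inner) complex_inner
begin
definition scaleC_prod_def: "scaleC a x = (scaleC a (fst x), scaleC a (snd x))"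
definition cinner_prod_def: "cinner x y = cinner (fst x) (fst y) + cinner (snd x) (snd y)"
instance
proof
  fix a b :: complex and x y z :: "'a \<times> 'b" and r :: real
  show "scaleC a (x + y) = scaleC a x + scaleC a y"
    by (simp add: scaleC_prod_def scaleC_add_right)
  show "scaleC (a + b) x = scaleC a x + scaleC b x"
    by (simp add: scaleC_prod_def scaleC_add_left)
  show "scaleC a (scaleC b x) = scaleC (a * b) x"
    by (simp add: scaleC_prod_def scaleC_scaleC)
  show "scaleC 1 x = x"
    by (simp add: scaleC_prod_def scaleC_one)
  show "scaleR r x = scaleC (complex_of_real r) x"
    by (simp add: scaleC_prod_def scaleR_prod_def scaleR_scaleC)
  show "cinner x y = cnj (cinner y x)"
    by (simp add: cinner_prod_def cinner_commute[of "fst x"] cinner_commute[of "snd x"])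
  show "cinner (x + y) z = cinner x z + cinner y z"
    by (simp add: cinner_prod_def cinner_add_left)
  show "cinner (scaleC a x) y = cnj a * cinner x y"
    by (simp add: cinner_prod_def scaleC_prod_def cinner_scaleC_left algebra_simps)
  show "Im (cinner x x) = 0"
    by (simp add: cinner_prod_def cinner_self_norm)
  show "0 \<le> Re (cinner x x)"
    by (simp add: cinner_prod_def cinner_self_norm)
  show "(cinner x x = 0) = (x = 0)"
  proof -
    have "cinner x x = complex_of_real ((norm (fst x))\<^sup>2 + (norm (snd x))\<^sup>2)"
      unfolding cinner_prod_def cinner_self_norm of_real_add ..
    then have "cinner x x = 0 \<longleftrightarrow> (norm (fst x))\<^sup>2 + (norm (snd x))\<^sup>2 = 0"
      by (metis of_real_eq_0_iff)
    also have "\<dots> \<longleftrightarrow> fst x = 0 \<and> snd x = 0" by (simp add: add_nonneg_eq_0_iff)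
    also have "\<dots> \<longleftrightarrow> x = 0" by (simp add: prod_eq_iff)
    finally show ?thesis .
  qed
  show "norm x = sqrt (Re (cinner x x))"
    by (simp add: cinner_prod_def cinner_self_norm norm_prod_def)
qed
end

instance prod :: (chilbert, chilbert) chilbert ..

lemma cinner_Pair: "cinner (a, b) (c, d) = cinner a c + cinner b d"
  by (simp add: cinner_prod_def)

lemma scaleC_Pair: "scaleC s (a, b) = (scaleC s a, scaleC s b)"
  by (simp add: scaleC_prod_def)

definition csub :: "'a::complex_inner set \<Rightarrow> bool" where
  "csub M \<longleftrightarrow> 0 \<in> M \<and> (\<forall>x\<in>M. \<forall>y\<in>M. x + y \<in> M) \<and> (\<forall>a. \<forall>x\<in>M. scaleC a x \<in> M)"

lemma lin_rel_csub: "lin_rel T \<longleftrightarrow> csub T"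
  unfolding lin_rel_def csub_def zero_prod_def
  by (auto simp: scaleC_Pair) (metis add_Pair, metis scaleC_Pair)

lemma parallelogram:
  "(norm (x - y))\<^sup>2 + (norm (x + y))\<^sup>2 = 2 * (norm (x::'a::complex_inner))\<^sup>2 + 2 * (norm y)\<^sup>2"
  by (simp add: norm_sq_Re cinner_add_left cinner_add_right cinner_diff_left cinner_diff_right)

lemma csub_diff: "csub M \<Longrightarrow> x \<in> M \<Longrightarrow> y \<in> M \<Longrightarrow> x - y \<in> M"
  unfolding csub_def by (metis diff_conv_add_uminus scaleC_minus1)

lemma projection:
  fixes M :: "'a::chilbert set"
  assumes sub: "csub M" and cl: "closed M"
  shows "\<exists>p\<in>M. \<forall>m\<in>M. cinner m (v - p) = 0"
proof -
  define d where "d = Inf ((\<lambda>m. norm (v - m)) ` M)"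
  have ne: "(\<lambda>m. norm (v - m)) ` M \<noteq> {}" using sub by (auto simp: csub_def)
  have bdd: "bdd_below ((\<lambda>m. norm (v - m)) ` M)" by (rule bdd_belowI[of _ 0]) auto
  have dle: "d \<le> norm (v - m)" if "m \<in> M" for m
    unfolding d_def using bdd that by (auto intro: cInf_lower)
  have d0: "0 \<le> d" unfolding d_def using ne by (auto intro: cInf_greatest)
  have "\<exists>m\<in>M. (norm (v - m))\<^sup>2 < d\<^sup>2 + 1 / (real n + 1)" for n
  proof -
    have "d\<^sup>2 < d\<^sup>2 + 1 / (real n + 1)" by simp
    then have "d < sqrt (d\<^sup>2 + 1 / (real n + 1))" by (rule real_less_rsqrt)
    then obtain m where m: "m \<in> M" "norm (v - m) < sqrt (d\<^sup>2 + 1 / (real n + 1))"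
      unfolding d_def using ne by (auto simp: cInf_less_iff[OF ne bdd])
    have "(norm (v - m))\<^sup>2 < (sqrt (d\<^sup>2 + 1 / (real n + 1)))\<^sup>2"
      using m(2) by (intro power_strict_mono) auto
    then show ?thesis using m(1) by (intro bexI[of _ m]) auto
  qed
  then obtain f where f: "\<And>n. f n \<in> M" "\<And>n. (norm (v - f n))\<^sup>2 < d\<^sup>2 + 1 / (real n + 1)"
    by (metis (no_types))
  have fd: "(norm (f n - f k))\<^sup>2 \<le> 2 / (real n + 1) + 2 / (real k + 1)" for n k
  proof -
    define mid where "mid = scaleC (1/2) (f n + f k)"
    have "mid \<in> M" using f(1) sub by (simp add: csub_def mid_def)
    then have "d \<le> norm (v - mid)" by (rule dle)
    then have d2: "4 * d\<^sup>2 \<le> 4 * (norm (v - mid))\<^sup>2" using d0 by (simp add: power_mono)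
    have m2: "scaleR 2 mid = f n + f k" by (simp add: mid_def scaleR_scaleC scaleC_scaleC scaleC_one)
    have "(v - f n) + (v - f k) = scaleR 2 (v - mid)"
    proof -
      have m3: "mid + mid = f n + f k" using m2 by (simp add: scaleR_2)
      have "scaleR 2 (v - mid) = (v + v) - (mid + mid)" by (simp add: scaleR_2 algebra_simps)
      then show ?thesis unfolding m3 by (simp add: algebra_simps)
    qed
    then have "(norm ((v - f n) + (v - f k)))\<^sup>2 = 4 * (norm (v - mid))\<^sup>2"
      by (simp add: power_mult_distrib)
    moreover have "(v - f n) - (v - f k) = f k - f n" by simp
    moreover note parallelogram[of "v - f n" "v - f k"] f(2)[of n] f(2)[of k]
    ultimately have "(norm (f k - f n))\<^sup>2 + 4 * (norm (v - mid))\<^sup>2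
        = 2 * (norm (v - f n))\<^sup>2 + 2 * (norm (v - f k))\<^sup>2" by simp
    then have "(norm (f k - f n))\<^sup>2 \<le> 2 / (real n + 1) + 2 / (real k + 1)"
      using d2 f(2)[of n] f(2)[of k] by linarith
    then show ?thesis by (simp add: norm_minus_commute)
  qed
  have "Cauchy f"
  proof (rule metric_CauchyI)
    fix e :: real assume e: "0 < e"
    obtain N :: nat where N: "4 / e\<^sup>2 < real N" using reals_Archimedean2 by blast
    have "dist (f m) (f n) < e" if "m \<ge> N" "n \<ge> N" for m n
    proof -
      have e2: "0 < e\<^sup>2" using e by simp
      have "2 / (real m + 1) \<le> 2 / (real N + 1)" "2 / (real n + 1) \<le> 2 / (real N + 1)"
        using that by (auto intro!: divide_left_mono)
      moreover have "4 / (real N + 1) < e\<^sup>2"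
      proof -
        have "4 < e\<^sup>2 * real N" using N e2 by (simp add: divide_less_eq mult.commute)
        then have "4 < e\<^sup>2 * (real N + 1)" using e2 unfolding distrib_left by linarith
        then show ?thesis by (simp add: divide_less_eq mult.commute)
      qed
      ultimately have "(norm (f m - f n))\<^sup>2 < e\<^sup>2" using fd[of m n] by linarith
      then show ?thesis using e by (simp add: dist_norm power_less_imp_less_base)
    qed
    then show "\<exists>N. \<forall>m\<ge>N. \<forall>n\<ge>N. dist (f m) (f n) < e" by blast
  qed
  then obtain p where fp: "f \<longlonglongrightarrow> p" using Cauchy_convergent_iff convergent_def by blast
  have pM: "p \<in> M" using cl f(1) fp closed_sequentially by blast
  have lim1: "(\<lambda>n. (norm (v - f n))\<^sup>2) \<longlonglongrightarrow> (norm (v - p))\<^sup>2"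
    by (intro tendsto_intros fp)
  have lim2: "(\<lambda>n. d\<^sup>2 + 1 / (real n + 1)) \<longlonglongrightarrow> d\<^sup>2 + 0"
  proof -
    have "(\<lambda>n. 1 / (real n + 1)) \<longlonglongrightarrow> 0"
      using LIMSEQ_inverse_real_of_nat by (simp add: inverse_eq_divide add.commute)
    then show ?thesis by (intro tendsto_intros)
  qed
  have pd: "(norm (v - p))\<^sup>2 \<le> d\<^sup>2"
    using LIMSEQ_le[OF lim1 lim2] f(2) less_imp_le by auto
  have mind: "(norm (v - p))\<^sup>2 \<le> (norm (v - m))\<^sup>2" if "m \<in> M" for m
    using pd power_mono[OF dle[OF that] d0, of 2] by linarith
  show ?thesis
  proof (intro bexI[OF _ pM] ballI)
    fix m assume mM: "m \<in> M"
    define w where "w = v - p"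
    define a where "a = cinner m w"
    define N where "N = (norm m)\<^sup>2"
    define s where "s = 1 / (N + 1)"
    have N0: "0 \<le> N" by (simp add: N_def)
    have s0: "0 < s" using N0 by (simp add: s_def)
    have sN: "s * N < 1" using N0 by (simp add: s_def)
    define t where "t = complex_of_real s * a"
    have "p + scaleC t m \<in> M" using sub pM mM by (simp add: csub_def)
    from mind[OF this] have ineq: "(norm w)\<^sup>2 \<le> (norm (w - scaleC t m))\<^sup>2"
      by (simp add: w_def diff_diff_eq)
    have aa: "a * cnj a = complex_of_real ((cmod a)\<^sup>2)" by (metis complex_norm_square of_real_power)
    have aa2: "cnj a * a = complex_of_real ((cmod a)\<^sup>2)" using aa by (simp add: mult.commute)
    have wm: "cinner w m = cnj a" by (simp add: a_def cinner_commute[of w m])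
    have "cinner (w - scaleC t m) (w - scaleC t m)
        = cinner w w - t * cinner w m - cnj t * cinner m w + cnj t * t * cinner m m"
      unfolding cinner_diff_left cinner_diff_right cinner_scaleC_left cinner_scaleC_right
      by (simp add: right_diff_distrib mult.assoc)
    also have "\<dots> = cinner w w - complex_of_real (2 * s * (cmod a)\<^sup>2) + complex_of_real (s\<^sup>2 * (cmod a)\<^sup>2 * N)"
    proof -
      have h1: "t * cinner w m = complex_of_real (s * (cmod a)\<^sup>2)"
        by (simp add: t_def wm mult.assoc aa)
      have h2: "cnj t * cinner m w = complex_of_real (s * (cmod a)\<^sup>2)"
        by (simp add: t_def mult.assoc aa2 flip: a_def)
      have h3: "cnj t * t * cinner m m = complex_of_real (s\<^sup>2 * (cmod a)\<^sup>2 * N)"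
      proof -
        have "cnj t * t = complex_of_real ((cmod t)\<^sup>2)"
          by (metis complex_norm_square of_real_power mult.commute)
        moreover have "cmod t = s * cmod a" using s0 by (simp add: t_def norm_mult)
        moreover have "cinner m m = complex_of_real N" by (simp add: N_def cinner_self_norm)
        ultimately show ?thesis by (simp add: power_mult_distrib)
      qed
      show ?thesis unfolding h1 h2 h3 by simp
    qed
    finally have "(norm (w - scaleC t m))\<^sup>2 = (norm w)\<^sup>2 - 2 * s * (cmod a)\<^sup>2 + s\<^sup>2 * (cmod a)\<^sup>2 * N"
      by (simp add: norm_sq_Re)
    with ineq have "0 \<le> s * (cmod a)\<^sup>2 * (s * N - 2)" by (simp add: algebra_simps power2_eq_square)
    moreover have "s * N - 2 < 0" using sN by simp
    ultimately have "s * (cmod a)\<^sup>2 \<le> 0"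
    proof -
      assume A: "0 \<le> s * (cmod a)\<^sup>2 * (s * N - 2)" "s * N - 2 < 0"
      show ?thesis
      proof (rule ccontr)
        assume "\<not> s * (cmod a)\<^sup>2 \<le> 0"
        then have "0 < s * (cmod a)\<^sup>2" by simp
        from mult_pos_neg[OF this A(2)] A(1) show False by simp
      qed
    qed
    then have "cmod a = 0" using s0 by (simp add: mult_le_0_iff)
    then show "cinner m (v - p) = 0" by (simp add: a_def w_def)
  qed
qed

lemma orth_mem:
  fixes M :: "'a::chilbert set"
  assumes "csub M" "closed M" and h: "\<And>q. (\<forall>m\<in>M. cinner m q = 0) \<Longrightarrow> cinner q v = 0"
  shows "v \<in> M"
proof -
  obtain p where p: "p \<in> M" "\<forall>m\<in>M. cinner m (v - p) = 0" using projection[OF assms(1,2)] by blast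
  have "cinner (v - p) v = 0" using h p(2) by blast
  moreover have "cinner (v - p) p = 0" using p by (metis cinner_commute complex_cnj_zero)
  ultimately have "cinner (v - p) (v - p) = 0" by (simp add: cinner_diff_right)
  then show ?thesis using p(1) by (simp add: cinner_self_eq_zero)
qed


lemma adj_iff: "(h, k) \<in> adj T \<longleftrightarrow> (\<forall>f g. (f, g) \<in> T \<longrightarrow> cinner g h = cinner f k)"
  by (simp add: adj_def)

lemma lin_rel_adj: "lin_rel (adj T)"
  unfolding lin_rel_def adj_iff
  by (simp add: cinner_add_right cinner_scaleC_right)

lemma adj_antimono: "S \<subseteq> T \<Longrightarrow> adj T \<subseteq> adj S"
  unfolding adj_def by blast

lemma sub_adj_adj: "T \<subseteq> adj (adj T)"
proof
  fix x assume x: "x \<in> T"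
  obtain a b where ab: "x = (a, b)" by (cases x)
  have "cinner k a = cinner h b" if "(h, k) \<in> adj T" for h k
  proof -
    have "cinner b h = cinner a k" using that x ab by (simp add: adj_iff)
    then show ?thesis using cinner_commute[of k a] cinner_commute[of h b] by simp
  qed
  then show "x \<in> adj (adj T)" using ab by (simp add: adj_iff)
qed

lemma closed_adj: "closed (adj (T :: ('a::complex_inner \<times> 'b::complex_inner) set))"
proof (rule closed_sequential_limits[THEN iffD2], intro allI impI, elim conjE)
  fix x :: "nat \<Rightarrow> 'b \<times> 'a" and l
  assume x: "\<forall>n. x n \<in> adj T" and lim: "x \<longlonglongrightarrow> l"
  show "l \<in> adj T"
  proof (cases l)
    case (Pair h k)
    have "cinner g h = cinner f k" if "(f, g) \<in> T" for f g
    proof -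
      have 1: "(\<lambda>n. cinner g (fst (x n))) \<longlonglongrightarrow> cinner g h"
        using tendsto_fst[OF lim] Pair by (intro tendsto_cinner tendsto_const) simp
      have 2: "(\<lambda>n. cinner f (snd (x n))) \<longlonglongrightarrow> cinner f k"
        using tendsto_snd[OF lim] Pair by (intro tendsto_cinner tendsto_const) simp
      have "cinner g (fst (x n)) = cinner f (snd (x n))" for n
        using x[rule_format, of n] that by (cases "x n") (simp add: adj_iff)
      then show ?thesis using 1 2 LIMSEQ_unique by fastforce
    qed
    then show ?thesis using Pair by (simp add: adj_iff)
  qed
qed

lemma bounded_linear_scaleC: "bounded_linear (scaleC a :: 'a::complex_inner \<Rightarrow> 'a)"
proof (rule bounded_linear_intro[of _ "cmod a"])
  fix x y :: 'a and r :: real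
  show "scaleC a (x + y) = scaleC a x + scaleC a y" by (rule scaleC_add_right)
  show "scaleC a (r *\<^sub>R x) = r *\<^sub>R scaleC a x"
    by (simp add: scaleR_scaleC scaleC_scaleC mult.commute)
  show "norm (scaleC a x) \<le> norm x * cmod a" by (simp add: norm_scaleC mult.commute)
qed

lemma csub_closure:
  fixes M :: "'a::complex_inner set"
  assumes "csub M" shows "csub (closure M)"
proof -
  have "0 \<in> closure M" using assms closure_subset unfolding csub_def by blast
  moreover have "x + y \<in> closure M" if X: "x \<in> closure M" "y \<in> closure M" for x y
  proof -
    obtain u where u: "\<forall>n. u n \<in> M" "u \<longlonglongrightarrow> x" using X(1) unfolding closure_sequential by blast
    obtain v where v: "\<forall>n. v n \<in> M" "v \<longlonglongrightarrow> y" using X(2) unfolding closure_sequential by blast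
    have "\<forall>n. u n + v n \<in> M" using u v assms by (simp add: csub_def)
    moreover have "(\<lambda>n. u n + v n) \<longlonglongrightarrow> x + y" using u v by (intro tendsto_add) auto
    ultimately show ?thesis unfolding closure_sequential by (intro exI[where x="\<lambda>n. u n + v n"]) simp
  qed
  moreover have "scaleC a x \<in> closure M" if X: "x \<in> closure M" for x a
  proof -
    obtain u where u: "\<forall>n. u n \<in> M" "u \<longlonglongrightarrow> x" using X(1) unfolding closure_sequential by blast
    have "\<forall>n. scaleC a (u n) \<in> M" using u assms by (simp add: csub_def)
    moreover have "(\<lambda>n. scaleC a (u n)) \<longlonglongrightarrow> scaleC a x"
      using u bounded_linear.tendsto[OF bounded_linear_scaleC] by blast
    ultimately show ?thesis unfolding closure_sequential by (intro exI[where x="\<lambda>n. scaleC a (u n)"]) simp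
  qed
  ultimately show ?thesis by (simp add: csub_def)
qed

lemma adj_adj_sub_closure:
  fixes T :: "('a::chilbert \<times> 'b::chilbert) set"
  assumes "lin_rel T"
  shows "adj (adj T) \<subseteq> closure T"
proof
  fix v assume v: "v \<in> adj (adj T)"
  obtain v1 v2 where vv: "v = (v1, v2)" by (cases v)
  show "v \<in> closure T"
  proof (rule orth_mem)
    show "csub (closure T)" using assms csub_closure lin_rel_csub by blast
    show "closed (closure T)" by simp
    fix q assume q: "\<forall>m\<in>closure T. cinner m q = 0"
    obtain q1 q2 where qq: "q = (q1, q2)" by (cases q)
    have "(- q2, q1) \<in> adj T"
    proof -
      have "cinner g (- q2) = cinner f q1" if "(f, g) \<in> T" for f g
      proof -
        have "cinner (f, g) q = 0" using q that closure_subset by blast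
        then have "cinner f q1 + cinner g q2 = 0" by (simp add: qq cinner_Pair)
        then have "cinner f q1 = - cinner g q2" by (simp add: eq_neg_iff_add_eq_0)
        then show ?thesis by simp
      qed
      then show ?thesis by (simp add: adj_iff)
    qed
    moreover have "(v1, v2) \<in> adj (adj T)" using v vv by simp
    ultimately have "cinner q1 v1 = cinner (- q2) v2" unfolding adj_iff[of v1 v2 "adj T"] by blast
    then show "cinner q v = 0" by (simp add: qq vv cinner_Pair)
  qed
qed

lemma closure_sub_adj_adj: "closure T \<subseteq> adj (adj T)"
  by (simp add: closed_adj closure_minimal sub_adj_adj)

lemma prod_adj_sym: "(T O adj T) \<subseteq> adj (T O adj T)"
proof
  fix x assume "x \<in> T O adj T"
  then obtain f k l where x: "x = (f, l)" "(f, k) \<in> T" "(k, l) \<in> adj T" by auto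
  have "cinner l2 f = cinner x2 l" if X: "(x2, l2) \<in> T O adj T" for x2 l2
  proof -
    obtain k2 where k2: "(x2, k2) \<in> T" "(k2, l2) \<in> adj T" using X by auto
    have 1: "cinner k k2 = cinner f l2" using k2(2) x(2) by (simp add: adj_iff)
    have 2: "cinner k2 k = cinner x2 l" using x(3) k2(1) by (simp add: adj_iff)
    show ?thesis using 1 2 cinner_commute[of k2 k] cinner_commute[of l2 f] cinner_commute[of x2 l] by simp
  qed
  then show "x \<in> adj (T O adj T)" using x by (auto simp: adj_iff)
qed

lemma prod_adj_surj:
  fixes T :: "('a::chilbert \<times> 'b::chilbert) set"
  assumes "lin_rel T" "closed T"
  shows "\<exists>x. (x, w - x) \<in> T O adj T"
proof -
  obtain p where p: "p \<in> T" "\<forall>m\<in>T. cinner m ((w, 0) - p) = 0"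
    using projection[of T "(w, 0)"] assms lin_rel_csub by blast
  obtain x y where xy: "p = (x, y)" by (cases p)
  have "cinner g y = cinner f (w - x)" if "(f, g) \<in> T" for f g
  proof -
    have "cinner (f, g) (w - x, - y) = 0" using p(2) that xy by auto
    then have "cinner f (w - x) + - cinner g y = 0" by (simp add: cinner_Pair)
    then show ?thesis by (simp add: add_eq_0_iff)
  qed
  then have "(y, w - x) \<in> adj T" by (simp add: adj_iff)
  then show ?thesis using p(1) xy by blast
qed

lemma prod_adj_selfadj:
  fixes T :: "('a::chilbert \<times> 'b::chilbert) set"
  assumes "lin_rel T" "closed T"
  shows "adj (T O adj T) \<subseteq> T O adj T"
proof
  fix v assume v: "v \<in> adj (T O adj T)"
  obtain h l where hl: "v = (h, l)" by (cases v)
  obtain x where x: "(x, (h + l) - x) \<in> T O adj T" using prod_adj_surj[OF assms] by blast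
  define z where "z = h - x"
  have L: "lin_rel (adj (T O adj T))" by (rule lin_rel_adj)
  have "(x, (h + l) - x) \<in> adj (T O adj T)" using x prod_adj_sym by blast
  then have "(h - x, l - ((h + l) - x)) \<in> adj (T O adj T)"
  proof -
    have "(scaleC (-1) x, scaleC (-1) ((h + l) - x)) \<in> adj (T O adj T)"
      using L \<open>(x, (h + l) - x) \<in> adj (T O adj T)\<close> unfolding lin_rel_def by blast
    then have "(- x, - ((h + l) - x)) \<in> adj (T O adj T)" by (simp only: scaleC_minus1)
    then have "(h + - x, l + - ((h + l) - x)) \<in> adj (T O adj T)"
      using L v hl unfolding lin_rel_def by blast
    then show ?thesis by (simp only: diff_conv_add_uminus[symmetric])
  qed
  then have zz: "(z, - z) \<in> adj (T O adj T)" by (simp add: z_def algebra_simps)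
  obtain x2 where x2: "(x2, z - x2) \<in> T O adj T" using prod_adj_surj[OF assms] by blast
  have "cinner (z - x2) z = cinner x2 (- z)" using zz x2 by (auto simp: adj_iff)
  then have "cinner z z = 0" by (simp add: cinner_diff_left)
  then have "z = 0" by (simp add: cinner_self_eq_zero)
  then show "v \<in> T O adj T" using x hl by (simp add: z_def)
qed


lemma rplus_iff: "(x, y) \<in> rplus c T \<longleftrightarrow> (x, y - scaleR c x) \<in> T"
  unfolding rplus_def by force

lemma rshift_iff: "(x, y) \<in> rshift c T \<longleftrightarrow> (x, y + scaleR c x) \<in> T"
  unfolding rshift_def by force

lemma rsum_iff: "(x, y) \<in> rsum A B \<longleftrightarrow> (\<exists>f g h k. (f, g) \<in> A \<and> (h, k) \<in> B \<and> x = f + h \<and> y = g + k)"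
  unfolding rsum_def by blast

lemma eig_iff: "(f, g) \<in> eig_rel c T \<longleftrightarrow> g = scaleR c f \<and> (f, scaleR c f) \<in> T"
  unfolding eig_rel_def by blast

lemma lin_rel_add: "lin_rel T \<Longrightarrow> (a, b) \<in> T \<Longrightarrow> (a', b') \<in> T \<Longrightarrow> (a + a', b + b') \<in> T"
  unfolding lin_rel_def by blast

lemma lin_rel_scaleC: "lin_rel T \<Longrightarrow> (a, b) \<in> T \<Longrightarrow> (scaleC s a, scaleC s b) \<in> T"
  unfolding lin_rel_def by blast

lemma lin_rel_diff: "lin_rel T \<Longrightarrow> (a, b) \<in> T \<Longrightarrow> (a', b') \<in> T \<Longrightarrow> (a - a', b - b') \<in> T"
proof -
  assume L: "lin_rel T" and 1: "(a, b) \<in> T" and 2: "(a', b') \<in> T"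
  have "(scaleC (-1) a', scaleC (-1) b') \<in> T" using lin_rel_scaleC[OF L 2] .
  then have "(- a', - b') \<in> T" by (simp only: scaleC_minus1)
  from lin_rel_add[OF L 1 this] show ?thesis by simp
qed

lemma lin_rel_scaleR: "lin_rel T \<Longrightarrow> (a, b) \<in> T \<Longrightarrow> (scaleR r a, scaleR r b) \<in> T"
  using lin_rel_scaleC[of T a b "complex_of_real r"] by (simp add: scaleR_scaleC)

lemma rplus_sym: "T \<subseteq> adj T \<Longrightarrow> rplus c T \<subseteq> adj (rplus c T)"
proof
  fix v assume T: "T \<subseteq> adj T" and v: "v \<in> rplus c T"
  obtain x y where xy: "v = (x, y)" by (cases v)
  have "cinner y2 x = cinner x2 y" if X: "(x2, y2) \<in> rplus c T" for x2 y2
  proof -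
    have "(x2, y2 - scaleR c x2) \<in> T" using X by (simp add: rplus_iff)
    moreover have "(x, y - scaleR c x) \<in> adj T" using v xy T by (auto simp: rplus_iff)
    ultimately have "cinner (y2 - scaleR c x2) x = cinner x2 (y - scaleR c x)" by (simp add: adj_iff)
    then show ?thesis
      by (simp add: cinner_diff_left cinner_diff_right cinner_scaleR_left cinner_scaleR_right)
  qed
  then show "v \<in> adj (rplus c T)" using xy by (auto simp: adj_iff)
qed

lemma gamma_lb:
  assumes "semibounded_lb S \<gamma>" "(\<phi>, \<phi>') \<in> S"
  shows "\<gamma> * (norm \<phi>)\<^sup>2 \<le> Re (cinner \<phi>' \<phi>)"
proof -
  from assms(1) have ne: "lb_set S \<noteq> {}" and bdd: "bdd_above (lb_set S)" and g: "\<gamma> = Sup (lb_set S)"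
    by (auto simp: semibounded_lb_def)
  have le: "b * (norm \<phi>)\<^sup>2 \<le> Re (cinner \<phi>' \<phi>)" if "b \<in> lb_set S" for b
    using that assms(2) by (auto simp: lb_set_def)
  show ?thesis
  proof (cases "norm \<phi> = 0")
    case True
    obtain b where "b \<in> lb_set S" using ne by blast
    then show ?thesis using le True by force
  next
    case False
    then have pos: "0 < (norm \<phi>)\<^sup>2" by simp
    have "b \<le> Re (cinner \<phi>' \<phi>) / (norm \<phi>)\<^sup>2" if "b \<in> lb_set S" for b
      using le[OF that] pos by (simp add: pos_le_divide_eq)
    then have "\<gamma> \<le> Re (cinner \<phi>' \<phi>) / (norm \<phi>)\<^sup>2" unfolding g using ne by (intro cSup_least) auto
    then show ?thesis using pos by (simp add: pos_le_divide_eq)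
  qed
qed

locale KS =
  fixes S :: "('a::chilbert \<times> 'a) set" and c :: real and Q :: "'a \<Rightarrow> 'b::chilbert"
  assumes linS: "lin_rel S" and rep: "rep_map S c Q"
begin

abbreviation "J \<equiv> companion S c Q"

lemma Q_add: "\<phi> \<in> Domain S \<Longrightarrow> \<psi> \<in> Domain S \<Longrightarrow> Q (\<phi> + \<psi>) = Q \<phi> + Q \<psi>"
  using rep by (simp add: rep_map_def)

lemma Q_scaleC: "\<phi> \<in> Domain S \<Longrightarrow> Q (scaleC a \<phi>) = scaleC a (Q \<phi>)"
  using rep by (simp add: rep_map_def)

lemma Dom_scaleC: "\<phi> \<in> Domain S \<Longrightarrow> scaleC a \<phi> \<in> Domain S"
  using linS unfolding lin_rel_def by blast

lemma Q_diff: "\<phi> \<in> Domain S \<Longrightarrow> \<psi> \<in> Domain S \<Longrightarrow> Q (\<phi> - \<psi>) = Q \<phi> - Q \<psi>"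
proof -
  assume a: "\<phi> \<in> Domain S" "\<psi> \<in> Domain S"
  have "Q (\<phi> + scaleC (-1) \<psi>) = Q \<phi> + scaleC (-1) (Q \<psi>)"
    using a Q_add Q_scaleC Dom_scaleC by simp
  then show ?thesis by (simp add: scaleC_minus1)
qed

lemma R1: "(\<phi>, \<phi>') \<in> S \<Longrightarrow> \<psi> \<in> Domain S \<Longrightarrow> cinner (\<phi>' - scaleR c \<phi>) \<psi> = cinner (Q \<phi>) (Q \<psi>)"
  using rep unfolding rep_map_def by (simp add: cinner_diff_left cinner_scaleR_left)

lemma S_sym: "S \<subseteq> adj S"
proof
  fix v assume v: "v \<in> S"
  obtain \<psi> \<psi>' where vv: "v = (\<psi>, \<psi>')" by (cases v)
  have "cinner \<phi>' \<psi> = cinner \<phi> \<psi>'" if X: "(\<phi>, \<phi>') \<in> S" for \<phi> \<phi>'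
  proof -
    have 1: "cinner \<phi>' \<psi> = complex_of_real c * cinner \<phi> \<psi> + cinner (Q \<phi>) (Q \<psi>)"
      using rep X v vv unfolding rep_map_def by blast
    have 2: "cinner \<psi>' \<phi> = complex_of_real c * cinner \<psi> \<phi> + cinner (Q \<psi>) (Q \<phi>)"
      using rep X v vv unfolding rep_map_def by blast
    from 2 have "cnj (cinner \<psi>' \<phi>) = cnj (complex_of_real c * cinner \<psi> \<phi> + cinner (Q \<psi>) (Q \<phi>))" by simp
    then have "cinner \<phi> \<psi>' = complex_of_real c * cinner \<phi> \<psi> + cinner (Q \<phi>) (Q \<psi>)"
      by (simp add: cinner_commute[of \<phi> \<psi>'] cinner_commute[of \<phi> \<psi>] cinner_commute[of "Q \<phi>" "Q \<psi>"])
    then show ?thesis using 1 by simp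
  qed
  then show "v \<in> adj S" using vv by (auto simp: adj_iff)
qed

lemma mem_J: "(x, y) \<in> J \<longleftrightarrow> (\<exists>\<phi> \<phi>'. (\<phi>, \<phi>') \<in> S \<and> x = Q \<phi> \<and> y = \<phi>' - scaleR c \<phi>)"
  unfolding companion_def by auto

lemma J_lin: "lin_rel J"
  unfolding lin_rel_def
proof (intro conjI allI impI)
  have "(0, 0) \<in> S" using linS by (simp add: lin_rel_def)
  moreover have "Q 0 = 0" using Q_add[of 0 0] \<open>(0, 0) \<in> S\<close> by (simp add: Domain.DomainI)
  ultimately show "(0, 0) \<in> J" unfolding mem_J by (intro exI[of _ 0]) auto
next
  fix f g h k assume "(f, g) \<in> J" "(h, k) \<in> J"
  then obtain \<phi> \<phi>' \<psi> \<psi>' where a: "(\<phi>, \<phi>') \<in> S" "f = Q \<phi>" "g = \<phi>' - scaleR c \<phi>"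
    "(\<psi>, \<psi>') \<in> S" "h = Q \<psi>" "k = \<psi>' - scaleR c \<psi>" unfolding mem_J by blast
  have "(\<phi> + \<psi>, \<phi>' + \<psi>') \<in> S" using lin_rel_add[OF linS a(1) a(4)] .
  moreover have "Q (\<phi> + \<psi>) = f + h" using a Q_add by blast
  moreover have "(\<phi>' + \<psi>') - scaleR c (\<phi> + \<psi>) = g + k" unfolding a(3) a(6) by (simp add: algebra_simps)
  ultimately show "(f + h, g + k) \<in> J" unfolding mem_J
    by (intro exI[of _ "\<phi> + \<psi>"] exI[of _ "\<phi>' + \<psi>'"]) simp
next
  fix a f g assume "(f, g) \<in> J"
  then obtain \<phi> \<phi>' where b: "(\<phi>, \<phi>') \<in> S" "f = Q \<phi>" "g = \<phi>' - scaleR c \<phi>" unfolding mem_J by blast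
  have "(scaleC a \<phi>, scaleC a \<phi>') \<in> S" using lin_rel_scaleC[OF linS b(1)] .
  moreover have "Q (scaleC a \<phi>) = scaleC a f" using b Q_scaleC by blast
  moreover have "scaleC a \<phi>' - scaleR c (scaleC a \<phi>) = scaleC a g"
    using b by (simp add: scaleC_diff_right scaleR_scaleC scaleC_scaleC mult.commute)
  ultimately show "(scaleC a f, scaleC a g) \<in> J" unfolding mem_J
    by (intro exI[of _ "scaleC a \<phi>"] exI[of _ "scaleC a \<phi>'"]) simp
qed

lemma R4: "\<psi> \<in> Domain S \<Longrightarrow> (\<psi>, Q \<psi>) \<in> adj J"
  unfolding adj_iff mem_J using R1 by blast

lemma Rker: "(f, 0) \<in> adj J \<longleftrightarrow> (f, scaleR c f) \<in> adj S"
proof -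
  have "(f, 0) \<in> adj J \<longleftrightarrow> (\<forall>\<phi> \<phi>'. (\<phi>, \<phi>') \<in> S \<longrightarrow> cinner (\<phi>' - scaleR c \<phi>) f = 0)"
    unfolding adj_iff mem_J by auto
  also have "\<dots> \<longleftrightarrow> (f, scaleR c f) \<in> adj S"
    unfolding adj_iff by (simp add: cinner_diff_left cinner_scaleR_left cinner_scaleR_right)
  finally show ?thesis .
qed

end


context KS begin

lemma k_char: "krein_k S c Q = rsum S (eig_rel c (adj S))"
proof (intro set_eqI iffI)
  fix v assume v: "v \<in> krein_k S c Q"
  obtain x y where xy: "v = (x, y)" by (cases v)
  from v xy have "(x, y - scaleR c x) \<in> adj J O J" by (simp add: krein_k_def rplus_iff)
  then obtain k where k: "(x, k) \<in> adj J" "(k, y - scaleR c x) \<in> J" by blast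
  then obtain \<psi> \<psi>' where p: "(\<psi>, \<psi>') \<in> S" "k = Q \<psi>" "y - scaleR c x = \<psi>' - scaleR c \<psi>"
    unfolding mem_J by blast
  have "(\<psi>, Q \<psi>) \<in> adj J" using R4 p(1) by blast
  from lin_rel_diff[OF lin_rel_adj k(1) this] p(2) have "(x - \<psi>, 0) \<in> adj J" by simp
  then have e: "(x - \<psi>, scaleR c (x - \<psi>)) \<in> adj S" using Rker by blast
  have yeq: "y = \<psi>' + scaleR c (x - \<psi>)" using p(3) by (simp add: algebra_simps)
  have "(x, y) \<in> rsum S (eig_rel c (adj S))"
    unfolding rsum_iff eig_iff
    apply (rule exI[of _ \<psi>], rule exI[of _ \<psi>'], rule exI[of _ "x - \<psi>"], rule exI[of _ "scaleR c (x - \<psi>)"])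
    using p(1) e yeq by simp
  then show "v \<in> rsum S (eig_rel c (adj S))" using xy by simp
next
  fix v assume v: "v \<in> rsum S (eig_rel c (adj S))"
  obtain x y where xy: "v = (x, y)" by (cases v)
  from v xy have "(x, y) \<in> rsum S (eig_rel c (adj S))" by simp
  then obtain \<psi> \<psi>' f where p: "(\<psi>, \<psi>') \<in> S" "(f, scaleR c f) \<in> adj S"
    "x = \<psi> + f" "y = \<psi>' + scaleR c f"
    unfolding rsum_iff eig_iff by blast
  have "(f, 0) \<in> adj J" using Rker p(2) by blast
  moreover have "(\<psi>, Q \<psi>) \<in> adj J" using R4 p(1) by blast
  ultimately have "(x, Q \<psi>) \<in> adj J" using lin_rel_add[OF lin_rel_adj] p(3) by (metis add.commute add_0)
  moreover have "(Q \<psi>, \<psi>' - scaleR c \<psi>) \<in> J" using p(1) unfolding mem_J by blast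
  moreover have "y - scaleR c x = \<psi>' - scaleR c \<psi>" using p(3,4) by (simp add: algebra_simps)
  ultimately have "(x, y) \<in> krein_k S c Q" unfolding krein_k_def rplus_iff by auto
  then show "v \<in> krein_k S c Q" using xy by simp
qed

lemma k_ext:
  assumes H: "lin_rel H" "H \<subseteq> adj H" "S \<subseteq> H" "Range (rshift c H) \<subseteq> Range (rshift c S)"
  shows "H \<subseteq> krein_k S c Q"
proof
  fix v assume v: "v \<in> H"
  obtain h h' where hh: "v = (h, h')" by (cases v)
  have "(h, h' - scaleR c h) \<in> rshift c H" using v hh by (simp add: rshift_iff)
  then have "h' - scaleR c h \<in> Range (rshift c S)" using H(4) by blast
  then obtain \<psi> where "(\<psi>, h' - scaleR c h) \<in> rshift c S" by blast
  then have p: "(\<psi>, h' - scaleR c h + scaleR c \<psi>) \<in> S" by (simp add: rshift_iff)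
  define \<psi>' where "\<psi>' = h' - scaleR c h + scaleR c \<psi>"
  have "(h - \<psi>, h' - \<psi>') \<in> H" using lin_rel_diff[OF H(1)] v hh p H(3) \<psi>'_def by blast
  moreover have "h' - \<psi>' = scaleR c (h - \<psi>)" by (simp add: \<psi>'_def algebra_simps)
  ultimately have "(h - \<psi>, scaleR c (h - \<psi>)) \<in> adj H" using H(2) by auto
  then have e: "(h - \<psi>, scaleR c (h - \<psi>)) \<in> adj S" using adj_antimono[OF H(3)] by blast
  have p': "(\<psi>, \<psi>') \<in> S" using p \<psi>'_def by simp
  have eq: "h' = \<psi>' + scaleR c (h - \<psi>)" by (simp add: \<psi>'_def algebra_simps)
  have "(h, h') \<in> rsum S (eig_rel c (adj S))"
    unfolding rsum_iff eig_iff
    apply (rule exI[of _ \<psi>], rule exI[of _ \<psi>'], rule exI[of _ "h - \<psi>"], rule exI[of _ "scaleR c (h - \<psi>)"])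
    using p' e eq by simp
  then show "v \<in> krein_k S c Q" using hh k_char by simp
qed

lemma LIM:
  assumes S: "\<And>n. (\<psi> n, \<psi>' n) \<in> S" and Qk: "(\<lambda>n. Q (\<psi> n)) \<longlonglongrightarrow> k"
    and ul: "(\<lambda>n. \<psi>' n - scaleR c (\<psi> n)) \<longlonglongrightarrow> l" and phi: "(\<phi>, \<phi>') \<in> S"
  shows "cinner (Q \<phi>) k = cinner \<phi> l"
proof -
  have 1: "(\<lambda>n. cinner (Q \<phi>) (Q (\<psi> n))) \<longlonglongrightarrow> cinner (Q \<phi>) k"
    by (intro tendsto_cinner tendsto_const Qk)
  have 2: "(\<lambda>n. cinner \<phi> (\<psi>' n - scaleR c (\<psi> n))) \<longlonglongrightarrow> cinner \<phi> l"
    by (intro tendsto_cinner tendsto_const ul)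
  have "cinner (Q \<phi>) (Q (\<psi> n)) = cinner \<phi> (\<psi>' n - scaleR c (\<psi> n))" for n
  proof -
    have "cinner (\<psi>' n - scaleR c (\<psi> n)) \<phi> = cinner (Q (\<psi> n)) (Q \<phi>)"
      using R1[OF S[of n]] phi by blast
    then show ?thesis
      using cinner_commute[of "Q \<phi>" "Q (\<psi> n)"] cinner_commute[of \<phi> "\<psi>' n - scaleR c (\<psi> n)"] by simp
  qed
  then show ?thesis using 1 2 LIMSEQ_unique by fastforce
qed

lemma KE:
  assumes v: "(h, h') \<in> krein_K S c Q"
  shows "(h, h') \<in> adj S \<and> (\<exists>\<psi> \<psi>' k. (\<forall>n. (\<psi> n, \<psi>' n) \<in> S) \<and>
      (\<lambda>n. \<psi>' n - scaleR c (\<psi> n)) \<longlonglongrightarrow> h' - scaleR c h \<and> (\<lambda>n. Q (\<psi> n)) \<longlonglongrightarrow> k)"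
proof -
  define l where "l = h' - scaleR c h"
  from v obtain k where k: "(h, k) \<in> adj J" "(k, l) \<in> adj (adj J)"
    unfolding krein_K_def rplus_iff l_def by blast
  have "(k, l) \<in> closure J" using k(2) adj_adj_sub_closure[OF J_lin] by blast
  then obtain x where x: "\<forall>n. x n \<in> J" "x \<longlonglongrightarrow> (k, l)" unfolding closure_sequential by blast
  have "\<forall>n. \<exists>p. p \<in> S \<and> x n = (Q (fst p), snd p - scaleR c (fst p))"
  proof
    fix n
    obtain a b where ab: "x n = (a, b)" by (cases "x n")
    then obtain \<phi> \<phi>' where "(\<phi>, \<phi>') \<in> S" "a = Q \<phi>" "b = \<phi>' - scaleR c \<phi>"
      using x(1) unfolding mem_J by (metis (no_types) mem_J)
    then show "\<exists>p. p \<in> S \<and> x n = (Q (fst p), snd p - scaleR c (fst p))"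
      using ab by (intro exI[of _ "(\<phi>, \<phi>')"]) simp
  qed
  then obtain P where P: "\<And>n. P n \<in> S" "\<And>n. x n = (Q (fst (P n)), snd (P n) - scaleR c (fst (P n)))"
    by (metis (no_types))
  define \<psi> where "\<psi> = (\<lambda>n. fst (P n))"
  define \<psi>' where "\<psi>' = (\<lambda>n. snd (P n))"
  have S': "\<And>n. (\<psi> n, \<psi>' n) \<in> S" using P(1) by (simp add: \<psi>_def \<psi>'_def)
  have Qk: "(\<lambda>n. Q (\<psi> n)) \<longlonglongrightarrow> k"
    using tendsto_fst[OF x(2)] P(2) by (simp add: \<psi>_def)
  have ul: "(\<lambda>n. \<psi>' n - scaleR c (\<psi> n)) \<longlonglongrightarrow> l"
    using tendsto_snd[OF x(2)] P(2) by (simp add: \<psi>_def \<psi>'_def)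
  have "cinner \<phi>' h = cinner \<phi> h'" if X: "(\<phi>, \<phi>') \<in> S" for \<phi> \<phi>'
  proof -
    have "(Q \<phi>, \<phi>' - scaleR c \<phi>) \<in> J" using X unfolding mem_J by blast
    then have "cinner (\<phi>' - scaleR c \<phi>) h = cinner (Q \<phi>) k" using k(1) by (simp add: adj_iff)
    also have "\<dots> = cinner \<phi> l" using LIM[OF S' Qk ul X] .
    finally have "cinner (\<phi>' - scaleR c \<phi>) h = cinner \<phi> l" .
    moreover have "h' = l + scaleR c h" by (simp add: l_def)
    ultimately show ?thesis
      by (simp add: cinner_diff_left cinner_add_right cinner_scaleR_left cinner_scaleR_right diff_eq_eq)
  qed
  then have "(h, h') \<in> adj S" by (simp add: adj_iff)
  then show ?thesis using S' Qk ul unfolding l_def by blast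
qed

lemma KI:
  assumes a: "(h, h') \<in> adj S" and S': "\<And>n. (\<psi> n, \<psi>' n) \<in> S"
    and ul: "(\<lambda>n. \<psi>' n - scaleR c (\<psi> n)) \<longlonglongrightarrow> h' - scaleR c h"
    and C: "Cauchy (\<lambda>n. Q (\<psi> n))"
  shows "(h, h') \<in> krein_K S c Q"
proof -
  define l where "l = h' - scaleR c h"
  obtain k where Qk: "(\<lambda>n. Q (\<psi> n)) \<longlonglongrightarrow> k" using C Cauchy_convergent_iff convergent_def by blast
  have "(\<lambda>n. (Q (\<psi> n), \<psi>' n - scaleR c (\<psi> n))) \<longlonglongrightarrow> (k, l)"
    using Qk ul by (simp add: l_def tendsto_Pair)
  moreover have "\<forall>n. (Q (\<psi> n), \<psi>' n - scaleR c (\<psi> n)) \<in> J" using S' unfolding mem_J by blast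
  ultimately have "(k, l) \<in> closure J"
    unfolding closure_sequential by (intro exI[where x="\<lambda>n. (Q (\<psi> n), \<psi>' n - scaleR c (\<psi> n))"]) simp
  then have kl: "(k, l) \<in> adj (adj J)" using closure_sub_adj_adj by blast
  have "cinner y h = cinner x k" if X: "(x, y) \<in> J" for x y
  proof -
    obtain \<phi> \<phi>' where p: "(\<phi>, \<phi>') \<in> S" "x = Q \<phi>" "y = \<phi>' - scaleR c \<phi>"
      using X unfolding mem_J by blast
    have "cinner \<phi>' h = cinner \<phi> h'" using a p(1) by (simp add: adj_iff)
    moreover have "h' = l + scaleR c h" by (simp add: l_def)
    ultimately have "cinner y h = cinner \<phi> l"
      using p(3) by (simp add: cinner_diff_left cinner_add_right cinner_scaleR_left cinner_scaleR_right)
    moreover have "cinner x k = cinner \<phi> l" using LIM[OF S' Qk _ p(1)] ul p(2) by (simp add: l_def)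
    ultimately show ?thesis by simp
  qed
  then have "(h, k) \<in> adj J" by (simp add: adj_iff)
  with kl have "(h, l) \<in> adj J O adj (adj J)" by blast
  then show ?thesis unfolding krein_K_def rplus_iff l_def by simp
qed

end


context KS begin

abbreviation "DD \<equiv> form_closure_dom (converse (rshift c S))"

lemma Qa_norm:
  assumes "(a, a') \<in> S"
  shows "cinner (a' - scaleR c a) a = complex_of_real ((norm (Q a))\<^sup>2)"
  using R1[OF assms, of a] assms by (auto simp: cinner_self_norm)

lemma DE:
  assumes "l \<in> DD"
  shows "\<exists>\<psi> \<psi>'. (\<forall>n. (\<psi> n, \<psi>' n) \<in> S) \<and> (\<lambda>n. \<psi>' n - scaleR c (\<psi> n)) \<longlonglongrightarrow> l \<and> Cauchy (\<lambda>n. Q (\<psi> n))"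
proof -
  obtain u where u: "\<forall>n. u n \<in> Domain (converse (rshift c S))" "u \<longlonglongrightarrow> l"
    and F: "\<forall>e>0. \<exists>N. \<forall>n\<ge>N. \<forall>m\<ge>N. \<forall>g. (u n - u m, g) \<in> converse (rshift c S) \<longrightarrow>
           cmod (cinner g (u n - u m)) < e"
    using assms unfolding form_closure_dom_def by blast
  have "\<forall>n. \<exists>\<phi>. (\<phi>, u n + scaleR c \<phi>) \<in> S"
  proof
    fix n
    obtain \<phi> where "(u n, \<phi>) \<in> converse (rshift c S)" using u(1) by blast
    then show "\<exists>\<phi>. (\<phi>, u n + scaleR c \<phi>) \<in> S" by (auto simp: rshift_iff)
  qed
  then obtain \<psi> where \<psi>: "\<And>n. (\<psi> n, u n + scaleR c (\<psi> n)) \<in> S" by metis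
  define \<psi>' where "\<psi>' = (\<lambda>n. u n + scaleR c (\<psi> n))"
  have S': "\<And>n. (\<psi> n, \<psi>' n) \<in> S" using \<psi> by (simp add: \<psi>'_def)
  have uu: "(\<lambda>n. \<psi>' n - scaleR c (\<psi> n)) = u" by (simp add: \<psi>'_def)
  have "Cauchy (\<lambda>n. Q (\<psi> n))"
  proof (rule metric_CauchyI)
    fix e :: real assume e: "0 < e"
    then obtain N where N: "\<forall>n\<ge>N. \<forall>m\<ge>N. \<forall>g. (u n - u m, g) \<in> converse (rshift c S) \<longrightarrow>
           cmod (cinner g (u n - u m)) < e\<^sup>2" using F by (meson zero_less_power)
    have "dist (Q (\<psi> m)) (Q (\<psi> n)) < e" if mn: "m \<ge> N" "n \<ge> N" for m n
    proof -
      define g where "g = \<psi> m - \<psi> n"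
      have gS: "(g, \<psi>' m - \<psi>' n) \<in> S" using lin_rel_diff[OF linS S'[of m] S'[of n]] by (simp add: g_def)
      have eq: "\<psi>' m - \<psi>' n - scaleR c g = u m - u n"
        by (simp add: g_def \<psi>'_def algebra_simps)
      have "(u m - u n, g) \<in> converse (rshift c S)"
      proof -
        have "u m - u n + scaleR c g = \<psi>' m - \<psi>' n" using eq by (simp add: algebra_simps)
        then show ?thesis using gS by (simp add: rshift_iff)
      qed
      then have lt: "cmod (cinner g (u m - u n)) < e\<^sup>2" using N mn by blast
      have "cinner (u m - u n) g = complex_of_real ((norm (Q g))\<^sup>2)"
        using Qa_norm[OF gS] eq by simp
      then have "cinner g (u m - u n) = complex_of_real ((norm (Q g))\<^sup>2)"
        using cinner_commute[of g "u m - u n"] by simp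
      then have "(norm (Q g))\<^sup>2 < e\<^sup>2" using lt by (simp add: norm_power)
      moreover have "Q g = Q (\<psi> m) - Q (\<psi> n)"
        using Q_diff S'[of m] S'[of n] by (simp add: g_def Domain.DomainI)
      ultimately show ?thesis using e by (simp add: dist_norm power_less_imp_less_base)
    qed
    then show "\<exists>N. \<forall>m\<ge>N. \<forall>n\<ge>N. dist (Q (\<psi> m)) (Q (\<psi> n)) < e" by blast
  qed
  then show ?thesis using S' u(2) uu by metis
qed

lemma DI:
  assumes S': "\<And>n. (\<psi> n, \<psi>' n) \<in> S" and ul: "(\<lambda>n. \<psi>' n - scaleR c (\<psi> n)) \<longlonglongrightarrow> l"
    and C: "Cauchy (\<lambda>n. Q (\<psi> n))"
  shows "l \<in> DD"
proof -
  define u where "u = (\<lambda>n. \<psi>' n - scaleR c (\<psi> n))"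
  have dom: "\<forall>n. u n \<in> Domain (converse (rshift c S))"
  proof
    fix n
    have "(u n, \<psi> n) \<in> converse (rshift c S)" using S'[of n] by (simp add: u_def rshift_iff)
    then show "u n \<in> Domain (converse (rshift c S))" by blast
  qed
  have "\<exists>N. \<forall>n\<ge>N. \<forall>m\<ge>N. \<forall>g. (u n - u m, g) \<in> converse (rshift c S) \<longrightarrow>
           cmod (cinner g (u n - u m)) < e" if e: "e > 0" for e
  proof -
    obtain N where N: "\<forall>m\<ge>N. \<forall>n\<ge>N. dist (Q (\<psi> m)) (Q (\<psi> n)) < sqrt e"
      using metric_CauchyD[OF C, of "sqrt e"] e by auto
    have "cmod (cinner g (u n - u m)) < e"
      if mn: "n \<ge> N" "m \<ge> N" and G: "(u n - u m, g) \<in> converse (rshift c S)" for n m g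
    proof -
      define a where "a = \<psi> n - \<psi> m"
      define a' where "a' = \<psi>' n - \<psi>' m"
      have aS: "(a, a') \<in> S" using lin_rel_diff[OF linS S'[of n] S'[of m]] by (simp add: a_def a'_def)
      have aeq: "a' - scaleR c a = u n - u m" by (simp add: a_def a'_def u_def algebra_simps)
      have gS: "(g, u n - u m + scaleR c g) \<in> S" using G by (simp add: rshift_iff)
      have 1: "cinner (u n - u m) g = cinner (Q a) (Q g)"
        using R1[OF aS, of g] gS aeq by (auto intro: Domain.DomainI)
      have 2: "cinner (u n - u m) a = cinner (Q g) (Q a)"
        using R1[OF gS, of a] aS by (auto intro: Domain.DomainI)
      have 3: "cinner (u n - u m) a = complex_of_real ((norm (Q a))\<^sup>2)"
        using Qa_norm[OF aS] aeq by simp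
      have "cinner g (u n - u m) = cnj (cinner (Q a) (Q g))"
        using 1 cinner_commute[of g "u n - u m"] by simp
      also have "\<dots> = cinner (Q g) (Q a)" using cinner_commute[of "Q g" "Q a"] by simp
      also have "\<dots> = complex_of_real ((norm (Q a))\<^sup>2)" using 2 3 by simp
      finally have "cmod (cinner g (u n - u m)) = (norm (Q a))\<^sup>2" by (simp add: norm_power)
      moreover have "norm (Q a) < sqrt e"
      proof -
        have "Q a = Q (\<psi> n) - Q (\<psi> m)"
          using Q_diff S'[of n] S'[of m] by (simp add: a_def Domain.DomainI)
        then show ?thesis using N mn by (simp add: dist_norm)
      qed
      then have "(norm (Q a))\<^sup>2 < e" using e power_strict_mono[of "norm (Q a)" "sqrt e" 2] by simp
      ultimately show ?thesis by simp
    qed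
    then show ?thesis by blast
  qed
  then show ?thesis unfolding form_closure_dom_def
    using dom ul by (intro CollectI exI[of _ u]) (simp add: u_def)
qed

lemma K_char:
  "krein_K S c Q = {(\<phi>, \<phi>'). (\<phi>, \<phi>') \<in> adj S \<and> \<phi>' - scaleR c \<phi> \<in> DD}"
proof (intro set_eqI iffI)
  fix v assume v: "v \<in> krein_K S c Q"
  obtain h h' where hh: "v = (h, h')" by (cases v)
  from KE[of h h'] v hh obtain \<psi> \<psi>' k where a: "(h, h') \<in> adj S" "\<forall>n. (\<psi> n, \<psi>' n) \<in> S"
    "(\<lambda>n. \<psi>' n - scaleR c (\<psi> n)) \<longlonglongrightarrow> h' - scaleR c h" "(\<lambda>n. Q (\<psi> n)) \<longlonglongrightarrow> k" by blast
  have "h' - scaleR c h \<in> DD" using DI[of \<psi> \<psi>'] a LIMSEQ_imp_Cauchy by blast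
  then show "v \<in> {(\<phi>, \<phi>'). (\<phi>, \<phi>') \<in> adj S \<and> \<phi>' - scaleR c \<phi> \<in> DD}" using a(1) hh by simp
next
  fix v assume v: "v \<in> {(\<phi>, \<phi>'). (\<phi>, \<phi>') \<in> adj S \<and> \<phi>' - scaleR c \<phi> \<in> DD}"
  obtain h h' where hh: "v = (h, h')" by (cases v)
  have a: "(h, h') \<in> adj S" "h' - scaleR c h \<in> DD" using v hh by auto
  from DE[OF a(2)] obtain \<psi> \<psi>' where "\<forall>n. (\<psi> n, \<psi>' n) \<in> S"
    "(\<lambda>n. \<psi>' n - scaleR c (\<psi> n)) \<longlonglongrightarrow> h' - scaleR c h" "Cauchy (\<lambda>n. Q (\<psi> n))" by blast
  then have "(h, h') \<in> krein_K S c Q" using KI[OF a(1)] by blast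
  then show "v \<in> krein_K S c Q" using hh by simp
qed

lemma K_sym: "krein_K S c Q \<subseteq> adj (krein_K S c Q)"
  unfolding krein_K_def by (rule rplus_sym[OF prod_adj_sym])

lemma K_unique:
  assumes H: "lin_rel H" "H = adj H" "S \<subseteq> H" "Range (rshift c H) \<subseteq> DD"
  shows "H = krein_K S c Q"
proof
  show HK: "H \<subseteq> krein_K S c Q"
  proof
    fix v assume v: "v \<in> H"
    obtain h h' where hh: "v = (h, h')" by (cases v)
    have "(h, h') \<in> adj S" using v hh H(2,3) adj_antimono[OF H(3)] by auto
    moreover have "(h, h' - scaleR c h) \<in> rshift c H" using v hh by (simp add: rshift_iff)
    then have "h' - scaleR c h \<in> DD" using H(4) by blast
    ultimately show "v \<in> krein_K S c Q" using hh K_char by simp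
  qed
  show "krein_K S c Q \<subseteq> H"
    using K_sym adj_antimono[OF HK] H(2) by blast
qed

lemma k_sub_K: "krein_k S c Q \<subseteq> krein_K S c Q"
proof
  fix v assume v: "v \<in> krein_k S c Q"
  obtain x y where xy: "v = (x, y)" by (cases v)
  have "(x, y - scaleR c x) \<in> adj J O J" using v xy by (simp add: krein_k_def rplus_iff)
  then have "(x, y - scaleR c x) \<in> adj J O adj (adj J)" using sub_adj_adj by blast
  then show "v \<in> krein_K S c Q" using xy by (simp add: krein_K_def rplus_iff)
qed

end


context KS begin

lemma closureS_adj: "closure S \<subseteq> adj S"
  by (rule closure_minimal[OF S_sym closed_adj])

lemma Re_Qa:
  assumes "(a, a') \<in> S"
  shows "(norm (Q a))\<^sup>2 = Re (cinner a' a) - c * (norm a)\<^sup>2"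
proof -
  have "Re (cinner (a' - scaleR c a) a) = (norm (Q a))\<^sup>2" using Qa_norm[OF assms] by simp
  then show ?thesis by (simp add: cinner_diff_left cinner_scaleR_left norm_sq_Re)
qed

lemma c1:
  assumes sb: "semibounded_lb S \<gamma>" and cg: "c < \<gamma>"
  shows "krein_K S c Q = rsum (closure S) (eig_rel c (adj S))"
proof (intro set_eqI iffI)
  fix v assume v: "v \<in> krein_K S c Q"
  obtain h h' where hh: "v = (h, h')" by (cases v)
  from KE[of h h'] v hh obtain \<psi> \<psi>' k where a: "(h, h') \<in> adj S" and S': "\<forall>n. (\<psi> n, \<psi>' n) \<in> S"
    and ul: "(\<lambda>n. \<psi>' n - scaleR c (\<psi> n)) \<longlonglongrightarrow> h' - scaleR c h" and Qk: "(\<lambda>n. Q (\<psi> n)) \<longlonglongrightarrow> k" by blast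
  define \<delta> where "\<delta> = \<gamma> - c"
  have \<delta>: "0 < \<delta>" using cg by (simp add: \<delta>_def)
  have bound: "\<delta> * (norm (\<psi> m - \<psi> n))\<^sup>2 \<le> (norm (Q (\<psi> m) - Q (\<psi> n)))\<^sup>2" for m n
  proof -
    have Sm: "(\<psi> m, \<psi>' m) \<in> S" and Sn: "(\<psi> n, \<psi>' n) \<in> S" using S' by auto
    have aS: "(\<psi> m - \<psi> n, \<psi>' m - \<psi>' n) \<in> S" using lin_rel_diff[OF linS Sm Sn] .
    have Qd: "Q (\<psi> m) - Q (\<psi> n) = Q (\<psi> m - \<psi> n)"
      using Q_diff[of "\<psi> m" "\<psi> n"] Sm Sn by (simp add: Domain.DomainI)
    show ?thesis unfolding Qd \<delta>_def left_diff_distrib using Re_Qa[OF aS] gamma_lb[OF sb aS] by linarith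
  qed
  have "Cauchy \<psi>"
  proof (rule metric_CauchyI)
    fix e :: real assume e: "0 < e"
    obtain N where N: "\<forall>m\<ge>N. \<forall>n\<ge>N. dist (Q (\<psi> m)) (Q (\<psi> n)) < e * sqrt \<delta>"
      using metric_CauchyD[OF LIMSEQ_imp_Cauchy[OF Qk], of "e * sqrt \<delta>"] e \<delta> by auto
    have "dist (\<psi> m) (\<psi> n) < e" if mn: "m \<ge> N" "n \<ge> N" for m n
    proof -
      have "norm (Q (\<psi> m) - Q (\<psi> n)) < e * sqrt \<delta>" using N mn by (simp add: dist_norm)
      then have "(norm (Q (\<psi> m) - Q (\<psi> n)))\<^sup>2 < (e * sqrt \<delta>)\<^sup>2"
        by (intro power_strict_mono) auto
      moreover have "(e * sqrt \<delta>)\<^sup>2 = \<delta> * e\<^sup>2" using \<delta> by (simp add: power_mult_distrib)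
      ultimately have "\<delta> * (norm (\<psi> m - \<psi> n))\<^sup>2 < \<delta> * e\<^sup>2"
        using bound[of m n] by linarith
      then have "(norm (\<psi> m - \<psi> n))\<^sup>2 < e\<^sup>2" using \<delta> by simp
      then show ?thesis using e by (simp add: dist_norm power_less_imp_less_base)
    qed
    then show "\<exists>N. \<forall>m\<ge>N. \<forall>n\<ge>N. dist (\<psi> m) (\<psi> n) < e" by blast
  qed
  then obtain p where p: "\<psi> \<longlonglongrightarrow> p" using Cauchy_convergent_iff convergent_def by blast
  define q where "q = (h' - scaleR c h) + scaleR c p"
  have "(\<lambda>n. (\<psi>' n - scaleR c (\<psi> n)) + scaleR c (\<psi> n)) \<longlonglongrightarrow> q"
    unfolding q_def by (intro tendsto_intros ul p)
  then have "\<psi>' \<longlonglongrightarrow> q" by simp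
  then have "(\<lambda>n. (\<psi> n, \<psi>' n)) \<longlonglongrightarrow> (p, q)" using p by (intro tendsto_Pair)
  then have pq: "(p, q) \<in> closure S"
    unfolding closure_sequential using S' by (intro exI[where x="\<lambda>n. (\<psi> n, \<psi>' n)"]) simp
  have pqa: "(p, q) \<in> adj S" using pq closureS_adj by blast
  have "(h - p, h' - q) \<in> adj S" using lin_rel_diff[OF lin_rel_adj a pqa] .
  moreover have "h' - q = scaleR c (h - p)" by (simp add: q_def algebra_simps)
  ultimately have e: "(h - p, scaleR c (h - p)) \<in> adj S" by simp
  have "(h, h') \<in> rsum (closure S) (eig_rel c (adj S))"
    unfolding rsum_iff eig_iff
    apply (rule exI[of _ p], rule exI[of _ q], rule exI[of _ "h - p"], rule exI[of _ "scaleR c (h - p)"])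
    using pq e by (simp add: q_def algebra_simps)
  then show "v \<in> rsum (closure S) (eig_rel c (adj S))" using hh by simp
next
  fix v assume v: "v \<in> rsum (closure S) (eig_rel c (adj S))"
  obtain x y where xy: "v = (x, y)" by (cases v)
  from v xy have "(x, y) \<in> rsum (closure S) (eig_rel c (adj S))" by simp
  then obtain p q f where pq: "(p, q) \<in> closure S" "(f, scaleR c f) \<in> adj S" "x = p + f" "y = q + scaleR c f"
    unfolding rsum_iff eig_iff by blast
  obtain z where z: "\<forall>n. z n \<in> S" "z \<longlonglongrightarrow> (p, q)" using pq(1) unfolding closure_sequential by blast
  define \<psi> where "\<psi> = (\<lambda>n. fst (z n))"
  define \<psi>' where "\<psi>' = (\<lambda>n. snd (z n))"
  have S': "\<And>n. (\<psi> n, \<psi>' n) \<in> S" using z(1) by (simp add: \<psi>_def \<psi>'_def)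
  have pl: "\<psi> \<longlonglongrightarrow> p" using tendsto_fst[OF z(2)] by (simp add: \<psi>_def)
  have ql: "\<psi>' \<longlonglongrightarrow> q" using tendsto_snd[OF z(2)] by (simp add: \<psi>'_def)
  have ul: "(\<lambda>n. \<psi>' n - scaleR c (\<psi> n)) \<longlonglongrightarrow> q - scaleR c p" by (intro tendsto_intros pl ql)
  have "Cauchy (\<lambda>n. Q (\<psi> n))"
  proof (rule metric_CauchyI)
    fix e :: real assume e: "0 < e"
    obtain N1 where N1: "\<forall>m\<ge>N1. \<forall>n\<ge>N1. dist (\<psi>' m - scaleR c (\<psi> m)) (\<psi>' n - scaleR c (\<psi> n)) < 1"
      using metric_CauchyD[OF LIMSEQ_imp_Cauchy[OF ul], of 1] by auto
    obtain N2 where N2: "\<forall>m\<ge>N2. \<forall>n\<ge>N2. dist (\<psi> m) (\<psi> n) < e\<^sup>2"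
      using metric_CauchyD[OF LIMSEQ_imp_Cauchy[OF pl], of "e\<^sup>2"] e by auto
    have "dist (Q (\<psi> m)) (Q (\<psi> n)) < e" if mn: "m \<ge> max N1 N2" "n \<ge> max N1 N2" for m n
    proof -
      define a where "a = \<psi> m - \<psi> n"
      define a' where "a' = \<psi>' m - \<psi>' n"
      have aS: "(a, a') \<in> S" using lin_rel_diff[OF linS S'[of m] S'[of n]] by (simp add: a_def a'_def)
      have Qa: "Q a = Q (\<psi> m) - Q (\<psi> n)" using Q_diff S'[of m] S'[of n] by (simp add: a_def Domain.DomainI)
      have n1: "norm (a' - scaleR c a) < 1"
        using N1 mn by (simp add: dist_norm a_def a'_def algebra_simps)
      have n2: "norm a < e\<^sup>2" using N2 mn by (simp add: dist_norm a_def)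
      have "(norm (Q a))\<^sup>2 = Re (cinner (a' - scaleR c a) a)" using Qa_norm[OF aS] by simp
      also have "\<dots> \<le> cmod (cinner (a' - scaleR c a) a)" by (rule complex_Re_le_cmod)
      also have "\<dots> \<le> norm (a' - scaleR c a) * norm a" by (rule cauchy_schwarz)
      also have "\<dots> \<le> 1 * norm a" using n1 by (intro mult_right_mono) auto
      also have "\<dots> < e\<^sup>2" using n2 by simp
      finally have "(norm (Q a))\<^sup>2 < e\<^sup>2" .
      then show ?thesis using e Qa by (simp add: dist_norm power_less_imp_less_base)
    qed
    then show "\<exists>N. \<forall>m\<ge>N. \<forall>n\<ge>N. dist (Q (\<psi> m)) (Q (\<psi> n)) < e" by blast
  qed
  moreover have "(x, y) \<in> adj S"
  proof -
    have pqa: "(p, q) \<in> adj S" using pq closureS_adj by blast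
    show ?thesis using lin_rel_add[OF lin_rel_adj pqa pq(2)] pq(3,4) by simp
  qed
  moreover have "y - scaleR c x = q - scaleR c p" using pq(3,4) by (simp add: algebra_simps)
  ultimately have "(x, y) \<in> krein_K S c Q" using KI[of x y \<psi> \<psi>'] S' ul by simp
  then show "v \<in> krein_K S c Q" using xy by simp
qed

abbreviation "RR \<equiv> Range (rshift c S)"
abbreviation "RS \<equiv> Range (rshift c (adj S))"

lemma KR: "(h, h') \<in> krein_K S c Q \<Longrightarrow> h' - scaleR c h \<in> closure RR"
proof -
  assume v: "(h, h') \<in> krein_K S c Q"
  from KE[OF v] obtain \<psi> \<psi>' where S': "\<forall>n. (\<psi> n, \<psi>' n) \<in> S"
    and ul: "(\<lambda>n. \<psi>' n - scaleR c (\<psi> n)) \<longlonglongrightarrow> h' - scaleR c h" by blast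
  have "\<forall>n. \<psi>' n - scaleR c (\<psi> n) \<in> RR"
  proof
    fix n
    have "(\<psi> n, \<psi>' n - scaleR c (\<psi> n)) \<in> rshift c S" using S' by (simp add: rshift_iff)
    then show "\<psi>' n - scaleR c (\<psi> n) \<in> RR" by blast
  qed
  then show ?thesis unfolding closure_sequential using ul
    by (intro exI[where x="\<lambda>n. \<psi>' n - scaleR c (\<psi> n)"]) simp
qed

lemma R_sub: "RR \<subseteq> RS"
proof
  fix l assume "l \<in> RR"
  then obtain h where "(h, l) \<in> rshift c S" by blast
  then have "(h, l) \<in> rshift c (adj S)" using S_sym by (auto simp: rshift_iff)
  then show "l \<in> RS" by blast
qed

lemma c2_if:
  assumes eq: "RR = closure RR \<inter> RS"
  shows "krein_k S c Q = krein_K S c Q"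
proof
  show "krein_k S c Q \<subseteq> krein_K S c Q" by (rule k_sub_K)
  show "krein_K S c Q \<subseteq> krein_k S c Q"
  proof
    fix v assume v: "v \<in> krein_K S c Q"
    obtain h h' where hh: "v = (h, h')" by (cases v)
    define l where "l = h' - scaleR c h"
    have vh: "(h, h') \<in> krein_K S c Q" using v hh by simp
    have a: "(h, h') \<in> adj S" using KE[OF vh] by blast
    have "l \<in> closure RR" using KR[OF vh] by (simp add: l_def)
    moreover have "(h, l) \<in> rshift c (adj S)" using a by (simp add: rshift_iff l_def)
    then have "l \<in> RS" by blast
    ultimately have "l \<in> RR" using eq by blast
    then obtain \<psi> where "(\<psi>, l) \<in> rshift c S" by blast
    then have p: "(\<psi>, l + scaleR c \<psi>) \<in> S" by (simp add: rshift_iff)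
    have pa: "(\<psi>, l + scaleR c \<psi>) \<in> adj S" using p S_sym by blast
    have "(h - \<psi>, h' - (l + scaleR c \<psi>)) \<in> adj S"
      using lin_rel_diff[OF lin_rel_adj a pa] .
    moreover have "h' - (l + scaleR c \<psi>) = scaleR c (h - \<psi>)" by (simp add: l_def algebra_simps)
    ultimately have e: "(h - \<psi>, scaleR c (h - \<psi>)) \<in> adj S" by simp
    have "(h, h') \<in> rsum S (eig_rel c (adj S))"
      unfolding rsum_iff eig_iff
      apply (rule exI[of _ \<psi>], rule exI[of _ "l + scaleR c \<psi>"], rule exI[of _ "h - \<psi>"],
          rule exI[of _ "scaleR c (h - \<psi>)"])
      using p e by (simp add: l_def algebra_simps)
    then show "v \<in> krein_k S c Q" using hh k_char by simp
  qed
qed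

lemma orth_closure:
  assumes f: "(f, 0) \<in> adj J" and l: "l \<in> closure RR"
  shows "cinner f l = 0"
proof -
  obtain r where r: "\<forall>n. r n \<in> RR" "r \<longlonglongrightarrow> l" using l unfolding closure_sequential by blast
  have "cinner (r n) f = 0" for n
  proof -
    obtain \<phi> where "(\<phi>, r n) \<in> rshift c S" using r(1) by blast
    then have "(\<phi>, r n + scaleR c \<phi>) \<in> S" by (simp add: rshift_iff)
    then have "(Q \<phi>, r n) \<in> J" unfolding mem_J
      apply (rule_tac x="\<phi>" in exI)
      apply (rule_tac x="r n + scaleR c \<phi>" in exI)
      by simp
    then have "cinner (r n) f = cinner (Q \<phi>) 0" using f unfolding adj_iff by blast
    then show ?thesis by simp
  qed
  moreover have "(\<lambda>n. cinner (r n) f) \<longlonglongrightarrow> cinner l f" using tendsto_cinner[OF r(2) tendsto_const[of f]] .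
  ultimately have "(\<lambda>n. 0) \<longlonglongrightarrow> cinner l f" by (simp only:)
  then have "cinner l f = 0" by (rule LIMSEQ_unique[OF tendsto_const, symmetric])
  then show ?thesis by (subst cinner_commute) simp
qed

lemma c2_only:
  assumes eq: "krein_k S c Q = krein_K S c Q"
  shows "RR = closure RR \<inter> RS"
proof
  show "RR \<subseteq> closure RR \<inter> RS" using closure_subset R_sub by blast
  show "closure RR \<inter> RS \<subseteq> RR"
  proof
    fix l assume l: "l \<in> closure RR \<inter> RS"
    then obtain h where "(h, l) \<in> rshift c (adj S)" by blast
    then have a: "(h, l + scaleR c h) \<in> adj S" by (simp add: rshift_iff)
    define A where "A = adj J O J"
    define B where "B = adj J O adj (adj J)"
    have AB: "A = B"
    proof (intro set_eqI)
      fix w :: "'a \<times> 'a"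
      obtain x y where w: "w = (x, y)" by (cases w)
      have "(x, y) \<in> A \<longleftrightarrow> (x, y + scaleR c x) \<in> krein_k S c Q"
        by (simp add: krein_k_def rplus_iff A_def)
      also have "\<dots> \<longleftrightarrow> (x, y + scaleR c x) \<in> krein_K S c Q" using eq by simp
      also have "\<dots> \<longleftrightarrow> (x, y) \<in> B" by (simp add: krein_K_def rplus_iff B_def)
      finally show "w \<in> A \<longleftrightarrow> w \<in> B" using w by simp
    qed
    have "cinner g' h = cinner g l" if X: "(g, g') \<in> A" for g g'
    proof -
      obtain k where k: "(g, k) \<in> adj J" "(k, g') \<in> J" using X by (auto simp: A_def)
      then obtain \<psi> \<psi>' where p: "(\<psi>, \<psi>') \<in> S" "k = Q \<psi>" "g' = \<psi>' - scaleR c \<psi>"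
        unfolding mem_J by blast
      have "(\<psi>, Q \<psi>) \<in> adj J" using R4 p(1) by blast
      from lin_rel_diff[OF lin_rel_adj k(1) this] p(2) have "(g - \<psi>, 0) \<in> adj J" by simp
      then have o: "cinner (g - \<psi>) l = 0" using orth_closure l by blast
      have "cinner \<psi>' h = cinner \<psi> (l + scaleR c h)" using a p(1) by (simp add: adj_iff)
      then have "cinner g' h = cinner \<psi> l"
        using p(3) by (simp add: cinner_diff_left cinner_add_right cinner_scaleR_left cinner_scaleR_right)
      moreover have "cinner g l = cinner \<psi> l" using o by (simp add: cinner_diff_left)
      ultimately show ?thesis by simp
    qed
    then have "(h, l) \<in> adj A" by (simp add: adj_iff)
    then have "(h, l) \<in> adj B" using AB by simp
    then have "(h, l) \<in> B"
      unfolding B_def by (rule subsetD[OF prod_adj_selfadj[OF lin_rel_adj closed_adj]])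
    then have "(h, l + scaleR c h) \<in> krein_K S c Q" by (simp add: krein_K_def rplus_iff B_def)
    then have "(h, l + scaleR c h) \<in> rsum S (eig_rel c (adj S))" using eq k_char by simp
    then obtain \<psi> \<psi>' f where p: "(\<psi>, \<psi>') \<in> S" "h = \<psi> + f" "l + scaleR c h = \<psi>' + scaleR c f"
      unfolding rsum_iff eig_iff by blast
    have "l = \<psi>' - scaleR c \<psi>"
    proof -
      have "l = \<psi>' + scaleR c f - scaleR c h" using p(3) by (simp add: algebra_simps)
      then show ?thesis using p(2) by (simp add: algebra_simps)
    qed
    then have "(\<psi>, l) \<in> rshift c S" using p(1) by (simp add: rshift_iff)
    then show "l \<in> RR" by blast
  qed
qed

lemma c2_closed: "closed RR \<Longrightarrow> krein_k S c Q = krein_K S c Q"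
  using c2_if R_sub closure_closed by (metis inf.absorb1)

end


theorem theorem6p1:
  fixes S :: "('a::chilbert \<times> 'a) set" and \<gamma> :: real
  assumes "lin_rel S" and "semibounded_lb S \<gamma>"
  shows "(\<forall>c\<le>\<gamma>. \<forall>Q :: 'a \<Rightarrow> 'b::chilbert. rep_map S c Q \<longrightarrow>
            krein_K S c Q = {(\<phi>, \<phi>'). (\<phi>, \<phi>') \<in> adj S \<and>
                 \<phi>' - scaleR c \<phi> \<in> form_closure_dom (converse (rshift c S))}
          \<and> (\<forall>H. lin_rel H \<and> H = adj H \<and> S \<subseteq> H \<and>
                 Range (rshift c H) \<subseteq> form_closure_dom (converse (rshift c S))
                 \<longrightarrow> H = krein_K S c Q)
          \<and> krein_k S c Q = rsum S (eig_rel c (adj S))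
          \<and> (\<forall>H. lin_rel H \<and> H \<subseteq> adj H \<and> S \<subseteq> H \<and>
                 Range (rshift c H) \<subseteq> Range (rshift c S)
                 \<longrightarrow> H \<subseteq> krein_k S c Q))
       \<and> (\<forall>c<\<gamma>. \<forall>Q :: 'a \<Rightarrow> 'b. rep_map S c Q \<longrightarrow>
            krein_K S c Q = rsum (closure S) (eig_rel c (adj S)))
       \<and> (\<forall>Q :: 'a \<Rightarrow> 'b. rep_map S \<gamma> Q \<longrightarrow>
            ((krein_k S \<gamma> Q = krein_K S \<gamma> Q \<longleftrightarrow>
                Range (rshift \<gamma> S) = closure (Range (rshift \<gamma> S)) \<inter> Range (rshift \<gamma> (adj S)))
             \<and> (closed (Range (rshift \<gamma> S)) \<longrightarrow> krein_k S \<gamma> Q = krein_K S \<gamma> Q)))"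
proof -
  have KSi: "KS S c Q" if "rep_map S c Q" for c and Q :: "'a \<Rightarrow> 'b"
    using assms(1) that by (rule KS.intro)
  have P1: "krein_K S c Q = {(\<phi>, \<phi>'). (\<phi>, \<phi>') \<in> adj S \<and>
                 \<phi>' - scaleR c \<phi> \<in> form_closure_dom (converse (rshift c S))}
          \<and> (\<forall>H. lin_rel H \<and> H = adj H \<and> S \<subseteq> H \<and>
                 Range (rshift c H) \<subseteq> form_closure_dom (converse (rshift c S))
                 \<longrightarrow> H = krein_K S c Q)
          \<and> krein_k S c Q = rsum S (eig_rel c (adj S))
          \<and> (\<forall>H. lin_rel H \<and> H \<subseteq> adj H \<and> S \<subseteq> H \<and>
                 Range (rshift c H) \<subseteq> Range (rshift c S)
                 \<longrightarrow> H \<subseteq> krein_k S c Q)"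
    if r: "rep_map S c Q" for c and Q :: "'a \<Rightarrow> 'b"
  proof -
    interpret KS S c Q by (rule KSi[OF r])
    show ?thesis
    proof (intro conjI allI impI)
      show "krein_K S c Q = {(\<phi>, \<phi>'). (\<phi>, \<phi>') \<in> adj S \<and>
                 \<phi>' - scaleR c \<phi> \<in> form_closure_dom (converse (rshift c S))}" by (rule K_char)
      show "krein_k S c Q = rsum S (eig_rel c (adj S))" by (rule k_char)
    next
      fix H :: "('a \<times> 'a) set"
      assume h: "lin_rel H \<and> H = adj H \<and> S \<subseteq> H \<and>
                 Range (rshift c H) \<subseteq> form_closure_dom (converse (rshift c S))"
      show "H = krein_K S c Q" using h by (intro K_unique) auto
    next
      fix H :: "('a \<times> 'a) set"
      assume h: "lin_rel H \<and> H \<subseteq> adj H \<and> S \<subseteq> H \<and> Range (rshift c H) \<subseteq> Range (rshift c S)"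
      show "H \<subseteq> krein_k S c Q" using h by (intro k_ext) auto
    qed
  qed
  have P2: "krein_K S c Q = rsum (closure S) (eig_rel c (adj S))"
    if r: "rep_map S c Q" and cg: "c < \<gamma>" for c and Q :: "'a \<Rightarrow> 'b"
    using KS.c1[OF KSi[OF r] assms(2) cg] .
  have P3: "(krein_k S \<gamma> Q = krein_K S \<gamma> Q \<longleftrightarrow>
                Range (rshift \<gamma> S) = closure (Range (rshift \<gamma> S)) \<inter> Range (rshift \<gamma> (adj S)))
             \<and> (closed (Range (rshift \<gamma> S)) \<longrightarrow> krein_k S \<gamma> Q = krein_K S \<gamma> Q)"
    if r: "rep_map S \<gamma> Q" for Q :: "'a \<Rightarrow> 'b"
  proof -
    interpret KS S \<gamma> Q by (rule KSi[OF r])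
    show ?thesis
    proof (intro conjI iffI impI)
      assume "krein_k S \<gamma> Q = krein_K S \<gamma> Q"
      then show "Range (rshift \<gamma> S) = closure (Range (rshift \<gamma> S)) \<inter> Range (rshift \<gamma> (adj S))"
        by (rule c2_only)
    next
      assume "Range (rshift \<gamma> S) = closure (Range (rshift \<gamma> S)) \<inter> Range (rshift \<gamma> (adj S))"
      then show "krein_k S \<gamma> Q = krein_K S \<gamma> Q" by (rule c2_if)
    next
      assume "closed (Range (rshift \<gamma> S))"
      then show "krein_k S \<gamma> Q = krein_K S \<gamma> Q" by (rule c2_closed)
    qed
  qed
  show ?thesis
    apply (rule conjI)
     apply (intro allI impI)
     apply (rule P1, assumption)
    apply (rule conjI)
     apply (intro allI impI)
     apply (rule P2, assumption, assumption)
    apply (intro allI impI)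
    apply (rule P3, assumption)
    done
qed


end
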